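(* Let $d, s, t$ be positive integers with $d \geq 3t-5$. Then \[ \mathrm{rb}(W_d(s), F_t) = \begin{cases} \left\lfloor \dfrac{2t-5}{t-2}\, d \right\rfloor + 1, & \text{if } s = 1 \text{ and } t \geq 4,\\[6pt] \left\lfloor \dfrac{3t-10}{t-3}\, d \right\rfloor + 1, & \text{if } s = 2 \text{ and } t \geq 6,\\[6pt] \left\lfloor \dfrac{(s+1)t-(3s+4)}{t-3}\, d \right\rfloor + 1, & \text{if } s \geq 3 \text{ and } t \geq 7. \end{cases} \]
   Context: A subgraph of an edge-colored graph is rainbow if no two of its edges have the same color. For graphs $G$ and $H$, the rainbow number $\mathrm{rb}(G,H)$ is the minimum integer $k$ such that every edge-coloring of $G$ that uses at least $k$ distinct colors contains a rainbow subgraph isomorphic to $H$. For $d \ge 3$ and $s \ge 1$, the $s$-hubbed wheel $W_d(s) = \overline{K_s} + C_d$ has vertex set $\{u_1,\dots,u_s\} \cup \{v_1,\dots,v_d\}$, where $v_1v_2\cdots v_dv_1$ is a cycle $C_d$, the hub vertices $u_1,\dots,u_s$ are pairwise non-adjacent, and every $u_a$ is adjacent to every $v_i$. Edges $u_av_i$ are spokes; edges $v_iv_{i+1}$ (indices mod $d$) are rim edges. $W_d := W_d(1)$ is the ordinary wheel. For $t \ge 3$, the fan $F_t$ is the graph obtained from a cycle $v_1v_2\cdots v_tv_1$ by adding all chords $v_1v_i$ for $3 \le i \le t-1$. *)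

theory Defs
  imports Complex_Main
begin

text \<open>Simple graphs are given by a set of edges, each edge a 2-element vertex set.\<close>

text \<open>The s-hubbed wheel W_d(s): hubs Inl a (a < s), rim vertices Inr i (i < d),
  rim cycle Inr 0, Inr 1, ..., Inr (d-1), Inr 0.\<close>
definition hubbed_wheel :: "nat \<Rightarrow> nat \<Rightarrow> (nat + nat) set set" where
  "hubbed_wheel d s =
     {{Inl a, Inr i} | a i. a < s \<and> i < d} \<union>
     {{Inr i, Inr ((i + 1) mod d)} | i. i < d}"

text \<open>Fan F_t on vertices 0..t-1 (vertex 0 plays the role of v_1): the cycle
  0,1,...,t-1,0 together with the chords {0,i} for 2 \<le> i \<le> t-2.\<close>
definition fan_vertices :: "nat \<Rightarrow> nat set" where
  "fan_vertices t = {..<t}"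

definition fan_edges :: "nat \<Rightarrow> nat set set" where
  "fan_edges t =
     {{i, (i + 1) mod t} | i. i < t} \<union> {{0, i} | i. 2 \<le> i \<and> i + 2 \<le> t}"

definition has_rainbow_copy ::
  "'a set set \<Rightarrow> ('a set \<Rightarrow> nat) \<Rightarrow> 'b set \<Rightarrow> 'b set set \<Rightarrow> bool" where
  "has_rainbow_copy EG c VH EH \<longleftrightarrow>
     (\<exists>f. inj_on f VH \<and> (\<forall>e\<in>EH. f ` e \<in> EG) \<and> inj_on (\<lambda>e. c (f ` e)) EH)"

text \<open>Rainbow number rb(G,H): least k such that every edge-colouring of G using at least
  k distinct colours contains a rainbow copy of H. (Colours are natural numbers, which
  is no loss of generality.)\<close>
definition rainbow_number :: "'a set set \<Rightarrow> 'b set \<Rightarrow> 'b set set \<Rightarrow> nat" where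
  "rainbow_number EG VH EH =
     (LEAST k. \<forall>c :: 'a set \<Rightarrow> nat. card (c ` EG) \<ge> k \<longrightarrow> has_rainbow_copy EG c VH EH)"

end

theory Submission
  imports Defs
begin

lemma modcancel: assumes "(j::nat) < d" "j' < d" "(j+i) mod d = (j'+i) mod d" shows "j = j'"
proof -
  have *: "x = y" if "y \<le> x" "x < d" "(x+i) mod d = (y+i) mod d" for x y :: nat
  proof -
    have "d dvd (x + i - (y + i))" using that mod_eq_dvd_iff_nat[of "y+i" "x+i" d] by simp
    then have "d dvd (x - y)" by simp
    moreover have "x - y < d" using that by simp
    ultimately have "x - y = 0" using nat_dvd_not_less by (cases "x - y = 0") auto
    then show ?thesis using that by simp
  qed
  show ?thesis using *[of j' j] *[of j j'] assms by (cases "j' \<le> j") auto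
qed

definition covs :: "nat \<Rightarrow> nat set \<Rightarrow> nat \<Rightarrow> nat set" where
  "covs d A w = {j. j < d \<and> (\<exists>i1 i2. i1 < i2 \<and> i2 < w \<and> (j+i1) mod d \<in> A \<and> (j+i2) mod d \<in> A)}"

definition hits :: "nat \<Rightarrow> nat set \<Rightarrow> nat \<Rightarrow> nat set" where
  "hits d A w = {j. j < d \<and> (\<exists>i<w. (j+i) mod d \<in> A)}"

lemma card_hit1: "card {j. j < d \<and> (\<exists>i<w. (j+i) mod d = a)} \<le> w"
proof -
  let ?S = "{j. j < d \<and> (\<exists>i<w. (j+i) mod d = a)}"
  define h where "h j = (LEAST i. i < w \<and> (j+i) mod d = a)" for j
  have h: "h j < w \<and> (j + h j) mod d = a" if "j \<in> ?S" for j
  proof -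
    from that obtain i where i: "i<w \<and> (j+i) mod d = a" by auto
    show ?thesis unfolding h_def by (rule LeastI[of "\<lambda>i. i < w \<and> (j+i) mod d = a" i]) (rule i)
  qed
  have "inj_on h ?S"
  proof (rule inj_onI)
    fix x y assume "x \<in> ?S" "y \<in> ?S" "h x = h y"
    then show "x = y" using h[of x] h[of y] modcancel[of x d y "h x"] by auto
  qed
  moreover have "h ` ?S \<subseteq> {..<w}" using h by auto
  ultimately show ?thesis
    using card_inj_on_le[of h ?S "{..<w}"] by simp
qed

lemma card_hits:
  assumes "finite A"
  shows "card (hits d A w) \<le> w * card A"
proof -
  have "hits d A w = (\<Union>a\<in>A. {j. j < d \<and> (\<exists>i<w. (j+i) mod d = a)})"
    unfolding hits_def by auto
  then have "card (hits d A w) \<le> (\<Sum>a\<in>A. card {j. j < d \<and> (\<exists>i<w. (j+i) mod d = a)})"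
    by (simp only:) (rule card_UN_le[OF assms])
  also have "\<dots> \<le> (\<Sum>a\<in>A. w)" by (rule sum_mono) (rule card_hit1)
  finally show ?thesis by (simp add: mult.commute)
qed

lemma arith1:
  fixes c d m w G :: int
  assumes "c + G \<le> m * w" "d \<le> G" "c \<le> d" "2 \<le> w" "w*(w-1) \<le> (w-2)*d" "1 \<le> m"
  shows "c \<le> (w-1)*(m-1)"
proof (rule ccontr)
  assume "\<not> ?thesis"
  then have c1: "c \<ge> (w-1)*(m-1) + 1" by simp
  have "m - 1 \<ge> d - w + 1" using c1 assms by (simp add: algebra_simps)
  then have "(w-1)*(m-1) \<ge> (w-1)*(d-w+1)" using assms by (intro mult_left_mono) auto
  then show False using c1 assms by (simp add: algebra_simps)
qed

lemma card_covs:
  assumes A: "A \<subseteq> {..<d}" and w: "2 \<le> w" "w \<le> d" "w*(w-1) \<le> (w-2)*d"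
  shows "card (covs d A w) \<le> (w-1)*(card A - 1)"
proof (cases "A = {}")
  case True
  then show ?thesis unfolding covs_def by simp
next
  case False
  have finA: "finite A" using A finite_subset by blast
  then obtain a0 where a0: "a0 \<in> A" using False by blast
  have d0: "0 < d" using a0 A by auto
  define g where "g a = (LEAST g. 0 < g \<and> (a+g) mod d \<in> A)" for a
  have gex: "0 < d \<and> (a+d) mod d \<in> A" if "a \<in> A" for a
    using that A d0 by auto
  have g1: "0 < g a \<and> (a + g a) mod d \<in> A" if "a \<in> A" for a
    unfolding g_def by (rule LeastI_ex) (use gex[OF that] in blast)
  have g2: "g a \<le> k" if "a \<in> A" "0 < k" "(a+k) mod d \<in> A" for a k
    unfolding g_def by (rule Least_le) (use that in blast)
  have step1: "card (covs d A w) \<le> (\<Sum>a\<in>A. w - g a)"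
  proof -
    define i1 where "i1 j = (LEAST i. i < w \<and> (j+i) mod d \<in> A)" for j
    define \<phi> where "\<phi> j = ((j + i1 j) mod d, i1 j)" for j
    have i1p: "i1 j < w \<and> (j + i1 j) mod d \<in> A \<and> (\<forall>i. i < w \<and> (j+i) mod d \<in> A \<longrightarrow> i1 j \<le> i)"
      if "j \<in> covs d A w" for j
    proof -
      from that obtain x y where xy: "x < y" "y < w" "(j+x) mod d \<in> A" "(j+y) mod d \<in> A"
        unfolding covs_def by auto
      show ?thesis unfolding i1_def
        by (rule conjI, rule LeastI2[of _ x], use xy in auto, rule LeastI2[of _ x], use xy in auto,
            rule Least_le, auto)
    qed
    have "inj_on \<phi> (covs d A w)"
    proof (rule inj_onI)
      fix x y assume xy: "x \<in> covs d A w" "y \<in> covs d A w" "\<phi> x = \<phi> y"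
      then have "i1 x = i1 y" "(x + i1 x) mod d = (y + i1 x) mod d" unfolding \<phi>_def by auto
      then show "x = y" using modcancel[of x d y "i1 x"] xy(1,2) unfolding covs_def by auto
    qed
    moreover have "\<phi> ` covs d A w \<subseteq> (SIGMA a:A. {..<w - g a})"
    proof
      fix z assume "z \<in> \<phi> ` covs d A w"
      then obtain j where j: "j \<in> covs d A w" "z = \<phi> j" by auto
      from j(1) obtain x y where xy: "x < y" "y < w" "(j+x) mod d \<in> A" "(j+y) mod d \<in> A"
        unfolding covs_def by auto
      note ip = i1p[OF j(1)]
      have "i1 j \<le> x" using ip xy by auto
      let ?a = "(j + i1 j) mod d"
      have "(?a + (y - i1 j)) mod d = ((j + i1 j) + (y - i1 j)) mod d" by (rule mod_add_left_eq)
      also have "\<dots> = (j + y) mod d" using \<open>i1 j \<le> x\<close> xy by simp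
      finally have "(?a + (y - i1 j)) mod d = (j + y) mod d" .
      then have "g ?a \<le> y - i1 j" using g2[of ?a "y - i1 j"] ip xy \<open>i1 j \<le> x\<close> by auto
      then show "z \<in> (SIGMA a:A. {..<w - g a})" using j ip xy \<open>i1 j \<le> x\<close> unfolding \<phi>_def by auto
    qed
    ultimately have "card (covs d A w) \<le> card (SIGMA a:A. {..<w - g a})"
      using finA by (intro card_inj_on_le) auto
    also have "\<dots> = (\<Sum>a\<in>A. w - g a)" using finA by (simp add: card_SigmaI)
    finally show ?thesis .
  qed
  have step2: "d \<le> (\<Sum>a\<in>A. g a)"
  proof -
    have "{..<d} \<subseteq> (\<Union>a\<in>A. (\<lambda>k. (a+k) mod d) ` {..<g a})"
    proof
      fix x assume x: "x \<in> {..<d}"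
      have ex: "\<exists>k. \<exists>a\<in>A. (a+k) mod d = x"
      proof (intro exI bexI)
        have "a0 < d" using a0 A by auto
        show "(a0 + (x + d - a0)) mod d = x" using x \<open>a0 < d\<close> by simp
      qed (rule a0)
      define k where "k = (LEAST k. \<exists>a\<in>A. (a+k) mod d = x)"
      have k1: "\<exists>a\<in>A. (a+k) mod d = x" unfolding k_def by (rule LeastI_ex) (rule ex)
      have k2: "k \<le> k'" if "\<exists>a\<in>A. (a+k') mod d = x" for k' unfolding k_def by (rule Least_le) (rule that)
      from k1 obtain a where a: "a \<in> A" "(a+k) mod d = x" by auto
      have "k < g a"
      proof (rule ccontr)
        assume "\<not> k < g a"
        then have le: "g a \<le> k" by simp
        have "((a + g a) mod d + (k - g a)) mod d = ((a + g a) + (k - g a)) mod d" by (rule mod_add_left_eq)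
        also have "\<dots> = (a + k) mod d" using le by simp
        finally have "((a + g a) mod d + (k - g a)) mod d = (a + k) mod d" .
        then have "k \<le> k - g a" using k2[of "k - g a"] g1[OF a(1)] a by auto
        then show False using g1[OF a(1)] le by auto
      qed
      then show "x \<in> (\<Union>a\<in>A. (\<lambda>k. (a+k) mod d) ` {..<g a})" using a by auto
    qed
    then have "card {..<d} \<le> card (\<Union>a\<in>A. (\<lambda>k. (a+k) mod d) ` {..<g a})"
      using finA by (intro card_mono) auto
    also have "\<dots> \<le> (\<Sum>a\<in>A. card ((\<lambda>k. (a+k) mod d) ` {..<g a}))"
      using finA by (rule card_UN_le)
    also have "\<dots> \<le> (\<Sum>a\<in>A. g a)"
      by (rule sum_mono) (metis card_image_le card_lessThan finite_lessThan)
    finally show ?thesis by simp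
  qed
  have cd: "card (covs d A w) \<le> d"
  proof -
    have "covs d A w \<subseteq> {..<d}" unfolding covs_def by auto
    then show ?thesis by (metis card_lessThan card_mono finite_lessThan)
  qed
  show ?thesis
  proof (cases "\<exists>a\<in>A. w \<le> g a")
    case True
    then obtain b where b: "b \<in> A" "w \<le> g b" by auto
    have "(\<Sum>a\<in>A. w - g a) = (w - g b) + (\<Sum>a\<in>A-{b}. w - g a)"
      using finA b(1) by (simp add: sum.remove)
    also have "\<dots> = (\<Sum>a\<in>A-{b}. w - g a)" using b by simp
    also have "\<dots> \<le> (\<Sum>a\<in>A-{b}. w - 1)"
      by (rule sum_mono) (use g1 in fastforce)
    also have "\<dots> = (w-1) * (card A - 1)" using b finA by simp
    finally show ?thesis using step1 by simp
  next
    case False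
    then have "\<forall>a\<in>A. g a < w" by auto
    then have "(\<Sum>a\<in>A. w - g a + g a) = (\<Sum>a\<in>A. w)"
      by (intro sum.cong) auto
    then have "(\<Sum>a\<in>A. w - g a) + (\<Sum>a\<in>A. g a) = (\<Sum>a\<in>A. w)"
      by (simp add: sum.distrib)
    then have e: "card (covs d A w) + (\<Sum>a\<in>A. g a) \<le> card A * w" using step1 by simp
    have "card A > 0" using finA a0 card_gt_0_iff by blast
    then have m1: "1 \<le> card A" by simp
    have wi: "int w * (int w - 1) \<le> (int w - 2) * int d"
    proof -
      have "int (w*(w-1)) \<le> int ((w-2)*d)" using w(3) by (simp only: of_nat_le_iff)
      then show ?thesis using w(1) by (simp add: of_nat_diff)
    qed
    have "int (card (covs d A w)) \<le> (int w - 1) * (int (card A) - 1)"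
    proof -
      obtain G where G: "G = sum g A" by simp
      have e': "card (covs d A w) + G \<le> card A * w" "d \<le> G" using e step2 G by auto
      show ?thesis
        apply (rule arith1[of _ "int G" "int (card A)" "int w" "int d"])
        using e' cd w m1 wi apply simp_all
        using e'(1) by (metis of_nat_add of_nat_le_iff of_nat_mult)
    qed
    moreover have "int ((w-1)*(card A - 1)) = (int w - 1)*(int (card A) - 1)"
      using w m1 by (simp add: of_nat_diff)
    ultimately show ?thesis by linarith
  qed
qed

lemma card_filter_sum: "finite K \<Longrightarrow> card {x\<in>K. P x} = (\<Sum>x\<in>K. if P x then 1 else 0)"
  by (simp add: sum.If_cases) (simp add: Int_def)

definition spk :: "nat \<Rightarrow> nat \<Rightarrow> (nat + nat) set" where "spk a i = {Inl a, Inr i}"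
definition rimE :: "nat \<Rightarrow> nat \<Rightarrow> (nat + nat) set" where "rimE d i = {Inr i, Inr ((i+1) mod d)}"
definition win :: "nat \<Rightarrow> nat \<Rightarrow> nat \<Rightarrow> nat \<Rightarrow> (nat + nat) set set" where
  "win d T a j = (\<lambda>i. spk a ((j+i) mod d)) ` {..T} \<union> (\<lambda>i. rimE d ((j+i) mod d)) ` {..<T}"

lemma modS: "(i::nat) < d \<Longrightarrow> (i+1) mod d = (if i + 1 = d then 0 else i+1)"
  by auto

lemma HW: "hubbed_wheel d s = {spk a i | a i. a < s \<and> i < d} \<union> rimE d ` {..<d}"
  unfolding hubbed_wheel_def spk_def rimE_def by auto

lemma spk_rim_ne[simp]: "spk a i \<noteq> rimE d k" "rimE d k \<noteq> spk a i"
  unfolding spk_def rimE_def by auto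

lemma spk_eq[simp]: "spk a i = spk b k \<longleftrightarrow> a = b \<and> i = k"
  unfolding spk_def by (auto simp: doubleton_eq_iff)

lemma rim_eq: assumes "3 \<le> d" "i < d" "k < d" shows "rimE d i = rimE d k \<longleftrightarrow> i = k"
proof
  assume "rimE d i = rimE d k"
  then have "(i = k) \<or> (i = (k+1) mod d \<and> (i+1) mod d = k)" unfolding rimE_def by (auto simp: doubleton_eq_iff)
  then show "i = k" using assms modS[of i d] modS[of k d] by (auto split: if_splits)
qed simp

lemma E_cases:
  assumes "{x, y} \<in> hubbed_wheel d s"
  shows "(\<exists>a i. a < s \<and> i < d \<and> ((x = Inl a \<and> y = Inr i) \<or> (x = Inr i \<and> y = Inl a)))
       \<or> (\<exists>v w. x = Inr v \<and> y = Inr w \<and> v < d \<and> w < d \<and> (w = (v+1) mod d \<or> v = (w+1) mod d))"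
  using assms unfolding hubbed_wheel_def by (auto simp: doubleton_eq_iff)

lemma adj_Inl: "{Inl a, y} \<in> hubbed_wheel d s \<Longrightarrow> a < s \<and> (\<exists>i<d. y = Inr i)"
  using E_cases[of "Inl a" y d s] by auto
lemma adj_Inl2: "{y, Inl a} \<in> hubbed_wheel d s \<Longrightarrow> a < s \<and> (\<exists>i<d. y = Inr i)"
  using adj_Inl[of a y d s] by (simp add: insert_commute)
lemma adj_InrInr: "{Inr v, Inr w} \<in> hubbed_wheel d s \<Longrightarrow> v < d \<and> w < d \<and> (w = (v+1) mod d \<or> v = (w+1) mod d)"
  using E_cases[of "Inr v" "Inr w" d s] by auto

lemma win_sub: assumes "a < s" "0 < d" shows "win d T a j \<subseteq> hubbed_wheel d s"
  unfolding win_def HW using assms by auto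

definition nu :: "nat \<Rightarrow> nat \<Rightarrow> (nat + nat) set" where
  "nu d n = (if n < d then rimE d n else spk ((n - d) div d) ((n - d) mod d))"

lemma nu_image: assumes "0 < d" shows "nu d ` {..<(s+1)*d} = hubbed_wheel d s"
proof
  show "nu d ` {..<(s+1)*d} \<subseteq> hubbed_wheel d s"
  proof
    fix e assume "e \<in> nu d ` {..<(s+1)*d}"
    then obtain n where n: "n < (s+1)*d" "e = nu d n" by auto
    show "e \<in> hubbed_wheel d s"
    proof (cases "n < d")
      case True then show ?thesis using n unfolding HW nu_def by auto
    next
      case False
      then have "(n - d) div d < s" using n by (auto simp: less_mult_imp_div_less algebra_simps)
      moreover have "(n - d) mod d < d" using assms by simp
      ultimately show ?thesis using n False unfolding HW nu_def by auto
    qed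
  qed
next
  show "hubbed_wheel d s \<subseteq> nu d ` {..<(s+1)*d}"
  proof
    fix e assume "e \<in> hubbed_wheel d s"
    then consider (r) i where "i < d" "e = rimE d i" | (sp) a i where "a < s" "i < d" "e = spk a i"
      unfolding HW by auto
    then show "e \<in> nu d ` {..<(s+1)*d}"
    proof cases
      case r then show ?thesis unfolding nu_def by (intro image_eqI[of _ _ i]) auto
    next
      case sp
      have "d + a*d + i < (s+1)*d"
      proof -
        have "a*d + d \<le> s*d" using sp(1) by (metis Suc_leI mult_Suc mult_le_mono1 add.commute)
        then show ?thesis using sp(2) by (simp add: algebra_simps)
      qed
      moreover have "nu d (d + a*d + i) = spk a i"
        unfolding nu_def using sp by simp
      ultimately show ?thesis using sp by (intro image_eqI[of _ _ "d + a*d + i"]) auto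
    qed
  qed
qed

lemma nu_inj: assumes "3 \<le> d" shows "inj_on (nu d) {..<(s+1)*d}"
proof (rule inj_onI)
  fix m n assume mn: "m \<in> {..<(s+1)*d}" "n \<in> {..<(s+1)*d}" "nu d m = nu d n"
  show "m = n"
  proof (cases "m < d"; cases "n < d")
    assume "m < d" "n < d" then show ?thesis using mn rim_eq[OF assms] unfolding nu_def by auto
  next
    assume "m < d" "\<not> n < d" then show ?thesis using mn unfolding nu_def by auto
  next
    assume "\<not> m < d" "n < d" then show ?thesis using mn unfolding nu_def by auto
  next
    assume a: "\<not> m < d" "\<not> n < d"
    then have "(m - d) div d = (n - d) div d" "(m - d) mod d = (n - d) mod d"
      using mn unfolding nu_def by auto
    then have "m - d = n - d" by (metis div_mult_mod_eq)
    then show ?thesis using a by simp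
  qed
qed

definition rhoS :: "nat \<Rightarrow> (nat+nat) set set \<Rightarrow> nat set" where "rhoS d C = {i. i < d \<and> rimE d i \<in> C}"
definition sigS :: "nat \<Rightarrow> (nat+nat) set set \<Rightarrow> nat \<Rightarrow> nat set" where "sigS d C a = {i. i < d \<and> spk a i \<in> C}"
definition covw :: "nat \<Rightarrow> nat \<Rightarrow> nat \<Rightarrow> (nat+nat) set set \<Rightarrow> nat set" where
  "covw d T a C = {j. j < d \<and> (\<exists>e1 e2. e1 \<in> win d T a j \<inter> C \<and> e2 \<in> win d T a j \<inter> C \<and> e1 \<noteq> e2)}"

lemma covsI: "i1 \<noteq> i2 \<Longrightarrow> i1 < w \<Longrightarrow> i2 < w \<Longrightarrow> j < d \<Longrightarrow> (j+i1) mod d \<in> A \<Longrightarrow> (j+i2) mod d \<in> A \<Longrightarrow> j \<in> covs d A w"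
  unfolding covs_def by (cases "i1 < i2") (auto, metis linorder_neqE_nat)

lemma covs_mono: "w \<le> w' \<Longrightarrow> covs d A w \<subseteq> covs d A w'"
  unfolding covs_def by fastforce

lemma covs_hits: "covs d A w \<subseteq> hits d A w"
  unfolding covs_def hits_def by fastforce

lemma covs_sub: "covs d A w \<subseteq> {..<d}" unfolding covs_def by auto
lemma hits_sub: "hits d A w \<subseteq> {..<d}" unfolding hits_def by auto

lemma covw_sub: assumes "0 < d"
  shows "covw d T a C \<subseteq> covs d (rhoS d C) T \<union> covs d (sigS d C a) (Suc T)
     \<union> (hits d (sigS d C a) (Suc T) \<inter> hits d (rhoS d C) T)"
proof
  fix j assume "j \<in> covw d T a C"
  then obtain e1 e2 where j: "j < d" and e: "e1 \<in> win d T a j" "e1 \<in> C" "e2 \<in> win d T a j" "e2 \<in> C" "e1 \<noteq> e2"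
    unfolding covw_def by auto
  have md: "(j + i) mod d < d" for i using assms by simp
  from e(1) consider (s1) i1 where "i1 \<le> T" "e1 = spk a ((j+i1) mod d)" | (r1) i1 where "i1 < T" "e1 = rimE d ((j+i1) mod d)"
    unfolding win_def by auto
  then show "j \<in> covs d (rhoS d C) T \<union> covs d (sigS d C a) (Suc T)
     \<union> (hits d (sigS d C a) (Suc T) \<inter> hits d (rhoS d C) T)"
  proof cases
    case s1
    from e(3) consider (s2) i2 where "i2 \<le> T" "e2 = spk a ((j+i2) mod d)" | (r2) i2 where "i2 < T" "e2 = rimE d ((j+i2) mod d)"
      unfolding win_def by auto
    then show ?thesis
    proof cases
      case s2
      then have "i1 \<noteq> i2" using s1 e by auto
      then have "j \<in> covs d (sigS d C a) (Suc T)"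
        using s1 s2 e j md by (intro covsI[of i1 i2]) (auto simp: sigS_def)
      then show ?thesis by auto
    next
      case r2
      have "j \<in> hits d (sigS d C a) (Suc T)" using s1 e j md unfolding hits_def sigS_def by auto
      moreover have "j \<in> hits d (rhoS d C) T" using r2 e j md unfolding hits_def rhoS_def by auto
      ultimately show ?thesis by auto
    qed
  next
    case r1
    from e(3) consider (s2) i2 where "i2 \<le> T" "e2 = spk a ((j+i2) mod d)" | (r2) i2 where "i2 < T" "e2 = rimE d ((j+i2) mod d)"
      unfolding win_def by auto
    then show ?thesis
    proof cases
      case r2
      then have "i1 \<noteq> i2" using r1 e by auto
      then have "j \<in> covs d (rhoS d C) T"
        using r1 r2 e j md by (intro covsI[of i1 i2]) (auto simp: rhoS_def)
      then show ?thesis by auto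
    next
      case s2
      have "j \<in> hits d (sigS d C a) (Suc T)" using s2 e j md unfolding hits_def sigS_def by (auto intro!: exI[of _ i2])
      moreover have "j \<in> hits d (rhoS d C) T" using r1 e j md unfolding hits_def rhoS_def by auto
      ultimately show ?thesis by auto
    qed
  qed
qed

lemma card_le_sub: "A \<subseteq> {..<(d::nat)} \<Longrightarrow> finite A" using finite_subset[of A "{..<d}"] by simp

lemma cov_bound1:
  assumes d: "T + 1 \<le> d" "(T+1)*T \<le> (T-1)*d" and T: "1 \<le> T"
  shows "card (covw d T a C) \<le> T * (card (rhoS d C) + card (sigS d C a) - 1)"
proof -
  have d0: "0 < d" using d T by simp
  have fr: "finite (rhoS d C)" "finite (sigS d C a)" unfolding rhoS_def sigS_def by auto
  have fin: "finite (covs d A w)" "finite (hits d A w)" for A w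
    by (rule card_le_sub[OF covs_sub], rule card_le_sub[OF hits_sub])
  have cw: "card (covs d A (T+1)) \<le> T * (card A - 1)" if "A \<subseteq> {..<d}" for A
    using card_covs[OF that, of "T+1"] d T by simp
  have sub: "rhoS d C \<subseteq> {..<d}" "sigS d C a \<subseteq> {..<d}" unfolding rhoS_def sigS_def by auto
  show ?thesis
  proof (cases "sigS d C a = {}")
    case True
    then have "covw d T a C \<subseteq> covs d (rhoS d C) (T+1)"
      using covw_sub[OF d0, of T a C] covs_mono[of T "T+1" d "rhoS d C"] unfolding covs_def hits_def by auto
    then have "card (covw d T a C) \<le> card (covs d (rhoS d C) (T+1))"
      by (intro card_mono fin)
    also have "\<dots> \<le> T * (card (rhoS d C) - 1)" by (rule cw[OF sub(1)])
    finally show ?thesis using True by simp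
  next
    case False
    then have s1: "1 \<le> card (sigS d C a)" using fr by (simp add: Suc_leI card_gt_0_iff)
    have "covw d T a C \<subseteq> covs d (sigS d C a) (T+1) \<union> hits d (rhoS d C) T"
      using covw_sub[OF d0, of T a C] covs_hits[of d "rhoS d C" T] by auto
    then have "card (covw d T a C) \<le> card (covs d (sigS d C a) (T+1) \<union> hits d (rhoS d C) T)"
      using fin by (intro card_mono) auto
    also have "\<dots> \<le> card (covs d (sigS d C a) (T+1)) + card (hits d (rhoS d C) T)"
      by (rule card_Un_le)
    also have "\<dots> \<le> T * (card (sigS d C a) - 1) + T * card (rhoS d C)"
      using cw[OF sub(2)] card_hits[OF fr(1), of d T] by simp
    also have "\<dots> = T * (card (rhoS d C) + card (sigS d C a) - 1)"
      using s1 by (simp add: algebra_simps)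
    finally show ?thesis .
  qed
qed

lemma cov_bound2a:
  assumes d: "T + 1 \<le> d" "(T+1)*T \<le> (T-1)*d" and T: "1 \<le> T" and r: "rhoS d C = {}"
  shows "card (covw d T a C) \<le> T * (card (sigS d C a) - 1)"
  using cov_bound1[OF d T, of a C] r by simp

lemma cov_bound2b:
  assumes d: "T \<le> d" "T*(T-1) \<le> (T-2)*d" and T: "2 \<le> T"
  shows "card (covw d T a C) \<le> (T-1) * (card (rhoS d C) - 1) + (T+1) * card (sigS d C a)"
proof -
  have d0: "0 < d" using d T by simp
  have fr: "finite (rhoS d C)" "finite (sigS d C a)" unfolding rhoS_def sigS_def by auto
  have fin: "finite (covs d A w)" "finite (hits d A w)" for A w
    by (rule card_le_sub[OF covs_sub], rule card_le_sub[OF hits_sub])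
  have sub: "rhoS d C \<subseteq> {..<d}" "sigS d C a \<subseteq> {..<d}" unfolding rhoS_def sigS_def by auto
  have "covw d T a C \<subseteq> covs d (rhoS d C) T \<union> hits d (sigS d C a) (T+1)"
    using covw_sub[OF d0, of T a C] covs_hits[of d "sigS d C a" "T+1"] by auto
  then have "card (covw d T a C) \<le> card (covs d (rhoS d C) T \<union> hits d (sigS d C a) (T+1))"
    using fin by (intro card_mono) auto
  also have "\<dots> \<le> card (covs d (rhoS d C) T) + card (hits d (sigS d C a) (T+1))"
    by (rule card_Un_le)
  also have "\<dots> \<le> (T-1) * (card (rhoS d C) - 1) + (T+1) * card (sigS d C a)"
    using card_covs[OF sub(1), of T] d T card_hits[OF fr(2), of d "T+1"] by simp
  finally show ?thesis .
qed

lemma finite_E: "finite (hubbed_wheel d s)"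
proof -
  have "hubbed_wheel d s = (\<lambda>(a,i). spk a i) ` ({..<s} \<times> {..<d}) \<union> rimE d ` {..<d}"
    unfolding HW by auto
  then show ?thesis by simp
qed

lemma card_class:
  assumes d: "3 \<le> d" and C: "C \<subseteq> hubbed_wheel d s"
  shows "card C = card (rhoS d C) + (\<Sum>a<s. card (sigS d C a))"
proof -
  have eq: "C = rimE d ` rhoS d C \<union> (\<Union>a\<in>{..<s}. spk a ` sigS d C a)"
  proof
    show "C \<subseteq> rimE d ` rhoS d C \<union> (\<Union>a\<in>{..<s}. spk a ` sigS d C a)"
    proof
      fix e assume e: "e \<in> C"
      then have "e \<in> hubbed_wheel d s" using C by auto
      then consider (r) i where "i < d" "e = rimE d i" | (sp) a i where "a < s" "i < d" "e = spk a i"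
        unfolding HW by auto
      then show "e \<in> rimE d ` rhoS d C \<union> (\<Union>a\<in>{..<s}. spk a ` sigS d C a)"
      proof cases
        case r then show ?thesis using e unfolding rhoS_def by auto
      next
        case sp then show ?thesis using e unfolding sigS_def by auto
      qed
    qed
    show "rimE d ` rhoS d C \<union> (\<Union>a\<in>{..<s}. spk a ` sigS d C a) \<subseteq> C"
      unfolding rhoS_def sigS_def by auto
  qed
  have fr: "finite (rhoS d C)" "finite (sigS d C a)" for a unfolding rhoS_def sigS_def by auto
  have c1: "card (rimE d ` rhoS d C) = card (rhoS d C)"
    by (rule card_image) (use rim_eq[OF d] in \<open>auto simp: inj_on_def rhoS_def\<close>)
  have c2: "card (spk a ` sigS d C a) = card (sigS d C a)" for a
    by (rule card_image) (auto simp: inj_on_def)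
  have c3: "card (\<Union>a\<in>{..<s}. spk a ` sigS d C a) = (\<Sum>a<s. card (spk a ` sigS d C a))"
    by (rule card_UN_disjoint) (auto simp: fr)
  have disj: "rimE d ` rhoS d C \<inter> (\<Union>a\<in>{..<s}. spk a ` sigS d C a) = {}" by auto
  have "card C = card (rimE d ` rhoS d C) + card (\<Union>a\<in>{..<s}. spk a ` sigS d C a)"
    by (subst eq, rule card_Un_disjoint) (auto simp: fr disj)
  then show ?thesis using c1 c2 c3 by simp
qed

lemma card_E: assumes "3 \<le> d" shows "card (hubbed_wheel d s) = (s+1)*d"
  using card_image[OF nu_inj[OF assms, of s]] nu_image[of d s] assms by simp

lemma sum_minus1:
  fixes f :: "nat \<Rightarrow> nat"
  assumes "finite I" "a0 \<in> I" "1 \<le> f a0"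
  shows "(\<Sum>a\<in>I. f a - 1) \<le> (\<Sum>a\<in>I. f a) - 1"
proof -
  have "(\<Sum>a\<in>I. f a - 1) = (f a0 - 1) + (\<Sum>a\<in>I-{a0}. f a - 1)" using assms by (simp add: sum.remove)
  also have "\<dots> \<le> (f a0 - 1) + (\<Sum>a\<in>I-{a0}. f a)" by (intro add_left_mono sum_mono) auto
  also have "\<dots> = (\<Sum>a\<in>I. f a) - 1" using assms by (simp add: sum.remove)
  finally show ?thesis .
qed

definition Bnd :: "nat \<Rightarrow> nat \<Rightarrow> nat" where "Bnd s T = (if s = 1 then T else s * (T - 1))"

definition condT :: "nat \<Rightarrow> nat \<Rightarrow> nat \<Rightarrow> bool" where
  "condT d s T \<longleftrightarrow> 3 \<le> d \<and> 1 \<le> T \<and> T + 1 \<le> d \<and> (T+1)*T \<le> (T-1)*d \<and>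
      (s \<ge> 2 \<longrightarrow> 3 \<le> T \<and> T*(T-1) \<le> (T-2)*d)"

lemma class_bound:
  assumes cd: "condT d s T" and s: "1 \<le> s" and C: "C \<subseteq> hubbed_wheel d s" "C \<noteq> {}"
  shows "(\<Sum>a<s. card (covw d T a C)) \<le> Bnd s T * (card C - 1)"
proof -
  have d3: "3 \<le> d" and T1: "1 \<le> T" and dT: "T + 1 \<le> d" "(T+1)*T \<le> (T-1)*d"
    using cd unfolding condT_def by auto
  have cC: "card C = card (rhoS d C) + (\<Sum>a<s. card (sigS d C a))"
    by (rule card_class[OF d3 C(1)])
  have cpos: "1 \<le> card C" using C finite_subset[OF C(1) finite_E] by (simp add: Suc_leI card_gt_0_iff)
  show ?thesis
  proof (cases "s = 1")
    case True
    then have "(\<Sum>a<s. card (covw d T a C)) = card (covw d T 0 C)" by simp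
    also have "\<dots> \<le> T * (card (rhoS d C) + card (sigS d C 0) - 1)" by (rule cov_bound1[OF dT T1])
    also have "\<dots> = Bnd s T * (card C - 1)" using True cC unfolding Bnd_def by simp
    finally show ?thesis .
  next
    case False
    then have s2: "2 \<le> s" using s by simp
    then have T3: "3 \<le> T" and dT2: "T*(T-1) \<le> (T-2)*d" using cd unfolding condT_def by auto
    have B: "Bnd s T = s * (T - 1)" using False unfolding Bnd_def by simp
    show ?thesis
    proof (cases "rhoS d C = {}")
      case True
      have cC': "card C = (\<Sum>a<s. card (sigS d C a))" using cC True by simp
      obtain a0 where a0: "a0 < s" "1 \<le> card (sigS d C a0)"
      proof (rule ccontr)
        assume "\<not> thesis"
        then have "\<forall>a<s. card (sigS d C a) = 0" using that by fastforce
        then have "card C = 0" using cC' by simp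
        then show False using cpos by simp
      qed
      have "(\<Sum>a<s. card (covw d T a C)) \<le> (\<Sum>a<s. T * (card (sigS d C a) - 1))"
        by (rule sum_mono) (rule cov_bound2a[OF dT T1 True])
      also have "\<dots> = T * (\<Sum>a<s. card (sigS d C a) - 1)" by (simp add: sum_distrib_left)
      also have "\<dots> \<le> T * ((\<Sum>a<s. card (sigS d C a)) - 1)"
        by (intro mult_left_mono sum_minus1[of "{..<s}" a0]) (use a0 in auto)
      also have "\<dots> = T * (card C - 1)" using cC' by simp
      also have "\<dots> \<le> (s * (T - 1)) * (card C - 1)"
      proof (intro mult_right_mono)
        have "2 * (T - 1) \<le> s * (T - 1)" using s2 by (intro mult_right_mono) auto
        then show "T \<le> s * (T - 1)" using T3 by linarith
      qed simp
      finally show ?thesis using B by simp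
    next
      case False
      then have r1: "1 \<le> card (rhoS d C)" by (simp add: Suc_leI card_gt_0_iff rhoS_def)
      have "(\<Sum>a<s. card (covw d T a C)) \<le> (\<Sum>a<s. (T-1) * (card (rhoS d C) - 1) + (T+1) * card (sigS d C a))"
        by (rule sum_mono) (rule cov_bound2b, use dT dT2 T3 in auto)
      also have "\<dots> = s * ((T-1) * (card (rhoS d C) - 1)) + (T+1) * (\<Sum>a<s. card (sigS d C a))"
        by (simp add: sum.distrib sum_distrib_left)
      also have "\<dots> \<le> s * ((T-1) * (card (rhoS d C) - 1)) + (s*(T-1)) * (\<Sum>a<s. card (sigS d C a))"
      proof (intro add_left_mono mult_right_mono)
        have "2 * (T - 1) \<le> s * (T - 1)" using s2 by (intro mult_right_mono) auto
        then show "T + 1 \<le> s * (T - 1)" using T3 by linarith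
      qed simp
      also have "\<dots> = (s * (T - 1)) * (card (rhoS d C) - 1 + (\<Sum>a<s. card (sigS d C a)))"
        by (simp add: algebra_simps)
      also have "\<dots> = Bnd s T * (card C - 1)" using B cC r1 by simp
      finally show ?thesis .
    qed
  qed
qed

lemma loss_bound:
  assumes cd: "condT d s T" and s: "1 \<le> s"
    and nr: "\<forall>a<s. \<forall>j<d. \<exists>e1 e2. e1 \<in> win d T a j \<and> e2 \<in> win d T a j \<and> e1 \<noteq> e2 \<and> c e1 = c e2"
  shows "s * d \<le> Bnd s T * (card (hubbed_wheel d s) - card (c ` hubbed_wheel d s))"
proof -
  let ?E = "hubbed_wheel d s"
  let ?K = "c ` ?E"
  define Cl where "Cl k = {e \<in> ?E. c e = k}" for k
  have d0: "0 < d" using cd unfolding condT_def by auto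
  have finK: "finite ?K" using finite_E by simp
  have ex: "1 \<le> card {k \<in> ?K. j \<in> covw d T a (Cl k)}" if aj: "a < s" "j < d" for a j
  proof -
    obtain e1 e2 where e: "e1 \<in> win d T a j" "e2 \<in> win d T a j" "e1 \<noteq> e2" "c e1 = c e2"
      using nr aj by blast
    have "e1 \<in> ?E" "e2 \<in> ?E" using e win_sub[OF aj(1) d0] by auto
    then have "c e1 \<in> {k \<in> ?K. j \<in> covw d T a (Cl k)}"
      using e aj unfolding covw_def Cl_def by auto
    then have ne: "{k \<in> ?K. j \<in> covw d T a (Cl k)} \<noteq> {}" by blast
    have "finite {k \<in> ?K. j \<in> covw d T a (Cl k)}" using finK by simp
    then show ?thesis using ne by (simp add: Suc_leI card_gt_0_iff)
  qed
  have "s * d = (\<Sum>a<s. \<Sum>j<d. (1::nat))" by simp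
  also have "\<dots> \<le> (\<Sum>a<s. \<Sum>j<d. card {k \<in> ?K. j \<in> covw d T a (Cl k)})"
    by (intro sum_mono) (use ex in auto)
  also have "\<dots> = (\<Sum>a<s. \<Sum>j<d. \<Sum>k\<in>?K. if j \<in> covw d T a (Cl k) then 1 else 0)"
    using finK by (simp add: card_filter_sum)
  also have "\<dots> = (\<Sum>a<s. \<Sum>k\<in>?K. \<Sum>j<d. if j \<in> covw d T a (Cl k) then 1 else 0)"
    by (intro sum.cong refl) (rule sum.swap)
  also have "\<dots> = (\<Sum>a<s. \<Sum>k\<in>?K. card (covw d T a (Cl k)))"
  proof -
    have "(\<Sum>j<d. if j \<in> covw d T a (Cl k) then 1 else 0) = card (covw d T a (Cl k))" for a k
    proof -
      have "card (covw d T a (Cl k)) = card {j\<in>{..<d}. j \<in> covw d T a (Cl k)}"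
        by (rule arg_cong[where f=card]) (unfold covw_def, auto)
      also have "\<dots> = (\<Sum>j<d. if j \<in> covw d T a (Cl k) then 1 else 0)" by (rule card_filter_sum) simp
      finally show ?thesis by simp
    qed
    then show ?thesis by simp
  qed
  also have "\<dots> = (\<Sum>k\<in>?K. \<Sum>a<s. card (covw d T a (Cl k)))"
    by (rule sum.swap)
  also have "\<dots> \<le> (\<Sum>k\<in>?K. Bnd s T * (card (Cl k) - 1))"
  proof (rule sum_mono)
    fix k assume "k \<in> ?K"
    then have "Cl k \<noteq> {}" unfolding Cl_def by auto
    moreover have "Cl k \<subseteq> ?E" unfolding Cl_def by auto
    ultimately show "(\<Sum>a<s. card (covw d T a (Cl k))) \<le> Bnd s T * (card (Cl k) - 1)"
      by (intro class_bound[OF cd s])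
  qed
  also have "\<dots> = Bnd s T * (\<Sum>k\<in>?K. card (Cl k) - 1)" by (simp add: sum_distrib_left)
  also have "(\<Sum>k\<in>?K. card (Cl k) - 1) = card ?E - card ?K"
  proof -
    have pos: "1 \<le> card (Cl k)" if "k \<in> ?K" for k
    proof -
      have "Cl k \<noteq> {}" "finite (Cl k)" using that finite_E unfolding Cl_def by auto
      then show ?thesis by (simp add: Suc_leI card_gt_0_iff)
    qed
    have "(\<Sum>k\<in>?K. card (Cl k) - 1) + card ?K = (\<Sum>k\<in>?K. card (Cl k) - 1 + 1)"
      by (subst sum.distrib) (simp only: card_eq_sum)
    also have "\<dots> = (\<Sum>k\<in>?K. card (Cl k))"
    proof (intro sum.cong refl)
      fix k assume "k \<in> ?K"
      then have "1 \<le> card (Cl k)" by (rule pos)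
      then show "card (Cl k) - 1 + 1 = card (Cl k)" by simp
    qed
    also have "\<dots> = card (\<Union>k\<in>?K. Cl k)"
      by (rule card_UN_disjoint[symmetric]) (use finite_E finK in \<open>auto simp: Cl_def\<close>)
    also have "(\<Union>k\<in>?K. Cl k) = ?E" unfolding Cl_def by auto
    finally show ?thesis by simp
  qed
  finally show ?thesis .
qed

lemma fan_sub: "e \<in> fan_edges t \<Longrightarrow> 2 \<le> t \<Longrightarrow> e \<subseteq> {..<t}"
  unfolding fan_edges_def by auto

lemma fan_cases:
  assumes "e \<in> fan_edges t" "3 \<le> t"
  obtains (sp) i where "1 \<le> i" "i < t" "e = {0, i}" | (rm) i where "1 \<le> i" "i + 1 < t" "e = {i, i+1}"
proof -
  from assms(1) consider (c) i where "i < t" "e = {i, (i+1) mod t}" | (ch) i where "2 \<le> i" "i + 2 \<le> t" "e = {0, i}"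
    unfolding fan_edges_def by auto
  then show ?thesis
  proof cases
    case c
    show ?thesis
    proof (cases "i = 0")
      case True then show ?thesis using c assms(2) sp[of 1] by simp
    next
      case False
      show ?thesis
      proof (cases "i + 1 = t")
        case True then have "e = {0, i}" using c by auto
        then show ?thesis using c False sp[of i] by simp
      next
        case F2: False
        then have "e = {i, i+1}" using c by simp
        then show ?thesis using c False F2 rm[of i] by simp
      qed
    qed
  next
    case ch then show ?thesis using sp[of i] by simp
  qed
qed

lemma fan_cyc: "k < t \<Longrightarrow> {k, (k+1) mod t} \<in> fan_edges t"
  unfolding fan_edges_def by blast

lemma fan_sp: "1 \<le> i \<Longrightarrow> i < t \<Longrightarrow> 3 \<le> t \<Longrightarrow> {0, i} \<in> fan_edges t"
proof -
  assume a: "1 \<le> i" "i < t" "3 \<le> t"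
  show ?thesis
  proof (cases "i = 1")
    case True
    then have "{0,i} = {0, (0+1) mod t}" using a by simp
    then show ?thesis using fan_cyc[of 0 t] a by simp
  next
    case False
    show ?thesis
    proof (cases "i + 1 = t")
      case True
      then have "{0,i} = {i, (i+1) mod t}" by auto
      then show ?thesis using fan_cyc[of i t] a by simp
    next
      case F2: False
      then have "{0,i} \<in> {{0, i} | i. 2 \<le> i \<and> i + 2 \<le> t}" using a False by auto
      then show ?thesis unfolding fan_edges_def by blast
    qed
  qed
qed

lemma fan_rm: "1 \<le> i \<Longrightarrow> i + 1 < t \<Longrightarrow> {i, i+1} \<in> fan_edges t"
proof -
  assume a: "1 \<le> i" "i + 1 < t"
  then have "{i, i+1} = {i, (i+1) mod t}" by simp
  then show ?thesis unfolding fan_edges_def using a by auto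
qed

lemma modsuc: "((x::nat) mod d + 1) mod d = (x + 1) mod d"
  by (rule mod_add_left_eq)

lemma win_copy:
  assumes t: "3 \<le> t" and td: "t \<le> d" and a: "a < s" and j: "j < d"
    and inj: "inj_on c (win d (t-2) a j)"
  shows "has_rainbow_copy (hubbed_wheel d s) c (fan_vertices t) (fan_edges t)"
proof -
  define f where "f x = (if x = 0 then Inl a else Inr ((j + (x - 1)) mod d))" for x :: nat
  have d0: "0 < d" using t td by simp
  have injf: "inj_on f {..<t}"
  proof (rule inj_onI)
    fix x y assume xy: "x \<in> {..<t}" "y \<in> {..<t}" "f x = f y"
    show "x = y"
    proof (cases "x = 0 \<or> y = 0")
      case True then show ?thesis using xy unfolding f_def by (auto split: if_splits)
    next
      case False
      then have "((x - 1) + j) mod d = ((y - 1) + j) mod d" using xy unfolding f_def by (simp add: add.commute)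
      then have "x - 1 = y - 1" using modcancel[of "x-1" d "y-1" j] xy td by simp
      then show ?thesis using False by linarith
    qed
  qed
  have img: "f ` e \<in> win d (t-2) a j" if e: "e \<in> fan_edges t" for e
    using e t
  proof (cases rule: fan_cases)
    case (sp i)
    then have "f ` e = spk a ((j + (i-1)) mod d)" unfolding f_def spk_def by auto
    then show ?thesis unfolding win_def using sp by (intro UnI1 image_eqI[of _ _ "i - 1"]) auto
  next
    case (rm i)
    have "(j + i) mod d = ((j + (i - 1)) mod d + 1) mod d" using rm modsuc[of "j + (i-1)" d] by simp
    then have "f ` e = rimE d ((j + (i-1)) mod d)" using rm unfolding f_def rimE_def by auto
    then show ?thesis unfolding win_def using rm by (intro UnI2 image_eqI[of _ _ "i - 1"]) auto
  qed
  have "inj_on (\<lambda>e. c (f ` e)) (fan_edges t)"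
  proof (rule inj_onI)
    fix x y assume xy: "x \<in> fan_edges t" "y \<in> fan_edges t" "c (f ` x) = c (f ` y)"
    then have "f ` x = f ` y" using inj img inj_onD by metis
    then show "x = y" using inj_on_image_eq_iff[OF injf] fan_sub xy t by auto
  qed
  moreover have "\<forall>e\<in>fan_edges t. f ` e \<in> hubbed_wheel d s" using img win_sub[OF a d0] by blast
  ultimately show ?thesis unfolding has_rainbow_copy_def fan_vertices_def using injf by blast
qed

definition cadj :: "nat \<Rightarrow> nat \<Rightarrow> nat \<Rightarrow> bool" where
  "cadj d v w \<longleftrightarrow> (w = (v+1) mod d \<or> v = (w+1) mod d)"

lemma cadj_iff: assumes "v < d" "w < d"
  shows "cadj d v w \<longleftrightarrow> (w = v + 1 \<or> v = w + 1 \<or> (v + 1 = d \<and> w = 0) \<or> (w + 1 = d \<and> v = 0))"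
  unfolding cadj_def using assms modS[of v d] modS[of w d] by auto

lemma nbr_Inr: "{Inr v, y} \<in> hubbed_wheel d s \<Longrightarrow> (\<exists>b<s. y = Inl b) \<or> (\<exists>w. y = Inr w \<and> w < d \<and> v < d \<and> cadj d v w)"
  using E_cases[of "Inr v" y d s] unfolding cadj_def by auto

lemma no_tri: assumes "4 \<le> d" "u < d" "v < d" "w < d" "u \<noteq> w" "cadj d v u" "cadj d v w" "cadj d u w"
  shows False
  using assms(6-8) assms(1-5) unfolding cadj_iff[OF assms(3,2)] cadj_iff[OF assms(3,4)] cadj_iff[OF assms(2,4)]
  by arith

lemma card_R: "card {w. w < d \<and> cadj d v w} \<le> 2" if "v < d"
proof -
  have "{w. w < d \<and> cadj d v w} \<subseteq> {(v+1) mod d, (v + d - 1) mod d}"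
  proof
    fix w assume w: "w \<in> {w. w < d \<and> cadj d v w}"
    then have "w = (v+1) mod d \<or> v = (w+1) mod d" unfolding cadj_def by auto
    moreover have "w = (v + d - 1) mod d" if "v = (w+1) mod d"
    proof (cases "w + 1 = d")
      case True then show ?thesis using that by simp
    next
      case False then have "v = w + 1" using that w modS[of w d] by auto
      then show ?thesis using w by simp
    qed
    ultimately show "w \<in> {(v+1) mod d, (v + d - 1) mod d}" by auto
  qed
  then have "card {w. w < d \<and> cadj d v w} \<le> card {(v+1) mod d, (v + d - 1) mod d}"
    by (intro card_mono) auto
  also have "\<dots> \<le> 2" by (simp add: card_insert_le_m1)
  finally show ?thesis .
qed

lemma copy_edges:
  assumes cp: "\<forall>e\<in>fan_edges t. f ` e \<in> hubbed_wheel d s" and t: "3 \<le> t"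
  shows "\<And>i. 1 \<le> i \<Longrightarrow> i < t \<Longrightarrow> {f 0, f i} \<in> hubbed_wheel d s"
    and "\<And>i. 1 \<le> i \<Longrightarrow> i + 1 < t \<Longrightarrow> {f i, f (i+1)} \<in> hubbed_wheel d s"
proof -
  fix i assume "1 \<le> i" "i < t"
  then have "f ` {0, i} \<in> hubbed_wheel d s" using cp fan_sp t by blast
  then show "{f 0, f i} \<in> hubbed_wheel d s" by simp
next
  fix i assume "1 \<le> i" "i + 1 < t"
  then have "f ` {i, i+1} \<in> hubbed_wheel d s" using cp fan_rm by blast
  then show "{f i, f (i+1)} \<in> hubbed_wheel d s" by simp
qed

lemma hub_case:
  assumes inj: "inj_on f {..<t}" and cp: "\<forall>e\<in>fan_edges t. f ` e \<in> hubbed_wheel d s"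
    and t: "3 \<le> t" and f0: "f 0 = Inl a"
  shows "a < s \<and> (\<exists>j<d. win d (t-2) a j \<subseteq> (\<lambda>e. f ` e) ` fan_edges t)"
proof -
  note ce = copy_edges[OF cp t]
  define p where "p i = projr (f i)" for i
  have fp: "f i = Inr (p i) \<and> p i < d" if "1 \<le> i" "i < t" for i
    using adj_Inl[of a "f i" d s] ce(1)[OF that] f0 unfolding p_def by auto
  have as: "a < s" using adj_Inl[of a "f 1" d s] ce(1)[of 1] f0 t by auto
  have st: "p (i+1) = (p i + 1) mod d \<or> p i = (p (i+1) + 1) mod d" if "1 \<le> i" "i + 1 < t" for i
  proof -
    have "{Inr (p i), Inr (p (i+1))} \<in> hubbed_wheel d s" using ce(2)[OF that] fp[of i] fp[of "i+1"] that by simp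
    then show ?thesis using adj_InrInr by blast
  qed
  have pinj: "i = i'" if "1 \<le> i" "i < t" "1 \<le> i'" "i' < t" "p i = p i'" for i i'
  proof -
    have "f i = f i'" using fp[of i] fp[of i'] that by simp
    then show ?thesis using inj that by (auto dest: inj_onD)
  qed
  let ?fw = "\<lambda>i. p (i+1) = (p i + 1) mod d"
  let ?bw = "\<lambda>i. p i = (p (i+1) + 1) mod d"
  have dir: "(\<forall>i. 1 \<le> i \<and> i + 1 < t \<longrightarrow> ?fw i) \<or> (\<forall>i. 1 \<le> i \<and> i + 1 < t \<longrightarrow> ?bw i)"
  proof -
    have fwall: "\<forall>n. n + 2 < t \<longrightarrow> ?fw (n+1)" if "?fw 1"
    proof
      fix n show "n + 2 < t \<longrightarrow> ?fw (n+1)"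
      proof (induction n)
        case 0 then show ?case using that by simp
      next
        case (Suc n)
        show ?case
        proof
          assume n: "Suc n + 2 < t"
          then have prev: "?fw (n+1)" using Suc by simp
          have "?fw (n+2) \<or> ?bw (n+2)" using st[of "n+2"] n by simp
          then show "?fw (Suc n + 1)"
          proof
            assume "?bw (n+2)"
            then have "(p (n+3) + 1) mod d = (p (n+1) + 1) mod d" using prev by (simp add: numeral_eq_Suc)
            then have "p (n+3) = p (n+1)" using modcancel[of "p (n+3)" d "p (n+1)" 1] fp[of "n+3"] fp[of "n+1"] n by simp
            then show ?thesis using pinj[of "n+3" "n+1"] n by simp
          qed (simp add: numeral_eq_Suc)
        qed
      qed
    qed
    have bwall: "\<forall>n. n + 2 < t \<longrightarrow> ?bw (n+1)" if "?bw 1"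
    proof
      fix n show "n + 2 < t \<longrightarrow> ?bw (n+1)"
      proof (induction n)
        case 0 then show ?case using that by simp
      next
        case (Suc n)
        show ?case
        proof
          assume n: "Suc n + 2 < t"
          then have prev: "?bw (n+1)" using Suc by simp
          have "?fw (n+2) \<or> ?bw (n+2)" using st[of "n+2"] n by simp
          then show "?bw (Suc n + 1)"
          proof
            assume "?fw (n+2)"
            then have "(p (n+3) + 0) mod d = (p (n+1) + 0) mod d" using prev by (simp add: numeral_eq_Suc)
            then have "p (n+3) = p (n+1)" using fp[of "n+3"] fp[of "n+1"] n by simp
            then show ?thesis using pinj[of "n+3" "n+1"] n by simp
          qed (simp add: numeral_eq_Suc)
        qed
      qed
    qed
    have "?fw 1 \<or> ?bw 1" using st[of 1] t by simp
    then show ?thesis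
    proof
      assume "?fw 1"
      then have "\<forall>n. n + 2 < t \<longrightarrow> ?fw (n+1)" by (rule fwall)
      then have "\<forall>i. 1 \<le> i \<and> i + 1 < t \<longrightarrow> ?fw i"
        by (metis Suc_eq_plus1 add_2_eq_Suc' add_Suc_right le_add_diff_inverse2 One_nat_def)
      then show ?thesis by blast
    next
      assume "?bw 1"
      then have "\<forall>n. n + 2 < t \<longrightarrow> ?bw (n+1)" by (rule bwall)
      then have "\<forall>i. 1 \<le> i \<and> i + 1 < t \<longrightarrow> ?bw i"
        by (metis Suc_eq_plus1 add_2_eq_Suc' add_Suc_right le_add_diff_inverse2 One_nat_def)
      then show ?thesis by blast
    qed
  qed
  from dir show ?thesis
  proof
    assume fw: "\<forall>i. 1 \<le> i \<and> i + 1 < t \<longrightarrow> ?fw i"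
    have pos: "p (1+k) = (p 1 + k) mod d" if "1 + k < t" for k
      using that
    proof (induction k)
      case 0 then show ?case using fp[of 1] t by simp
    next
      case (Suc k)
      then have "p (1 + Suc k) = (p (1+k) + 1) mod d" using fw[rule_format, of "1+k"] by simp
      also have "\<dots> = ((p 1 + k) mod d + 1) mod d" using Suc by simp
      also have "\<dots> = (p 1 + Suc k) mod d" using modsuc[of "p 1 + k" d] by simp
      finally show ?case .
    qed
    have "win d (t-2) a (p 1) \<subseteq> (\<lambda>e. f ` e) ` fan_edges t"
    proof
      fix x assume "x \<in> win d (t-2) a (p 1)"
      then consider (sp) k where "k \<le> t-2" "x = spk a ((p 1 + k) mod d)" | (rm) k where "k < t-2" "x = rimE d ((p 1 + k) mod d)"
        unfolding win_def by auto
      then show "x \<in> (\<lambda>e. f ` e) ` fan_edges t"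
      proof cases
        case sp
        then have "x = f ` {0, 1+k}" using pos[of k] fp[of "1+k"] f0 t unfolding spk_def by auto
        moreover have "{0, 1+k} \<in> fan_edges t" using fan_sp[of "1+k" t] sp t by simp
        ultimately show ?thesis by blast
      next
        case rm
        have "p (1 + k + 1) = (p (1+k) + 1) mod d" using fw[rule_format, of "1+k"] rm by simp
        then have "x = f ` {1+k, 1+k+1}" using pos[of k] fp[of "1+k"] fp[of "1+k+1"] rm unfolding rimE_def by auto
        moreover have "{1+k, 1+k+1} \<in> fan_edges t" using fan_rm[of "1+k" t] rm by simp
        ultimately show ?thesis by blast
      qed
    qed
    then show ?thesis using as fp[of 1] t by auto
  next
    assume bw: "\<forall>i. 1 \<le> i \<and> i + 1 < t \<longrightarrow> ?bw i"
    have pos: "p m = (p (m+k) + k) mod d" if "1 \<le> m" "m + k < t" for m k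
      using that
    proof (induction k)
      case 0 then show ?case using fp[of m] by simp
    next
      case (Suc k)
      then have "p m = (p (m+k) + k) mod d" by simp
      also have "p (m+k) = (p (m+k+1) + 1) mod d" using bw[rule_format, of "m+k"] Suc by simp
      finally have "p m = ((p (m+k+1) + 1) mod d + k) mod d" .
      also have "\<dots> = (p (m+k+1) + 1 + k) mod d" by (simp add: mod_add_left_eq)
      finally show ?case by (simp add: add.commute add.left_commute)
    qed
    let ?j = "p (t-1)"
    have "win d (t-2) a ?j \<subseteq> (\<lambda>e. f ` e) ` fan_edges t"
    proof
      fix x assume "x \<in> win d (t-2) a ?j"
      then consider (sp) k where "k \<le> t-2" "x = spk a ((?j + k) mod d)" | (rm) k where "k < t-2" "x = rimE d ((?j + k) mod d)"
        unfolding win_def by auto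
      then show "x \<in> (\<lambda>e. f ` e) ` fan_edges t"
      proof cases
        case sp
        have "p (t-1-k) = (?j + k) mod d" using pos[of "t-1-k" k] sp t by simp
        then have "x = f ` {0, t-1-k}" using fp[of "t-1-k"] f0 t sp unfolding spk_def by auto
        moreover have "{0, t-1-k} \<in> fan_edges t" using fan_sp[of "t-1-k" t] sp t by simp
        ultimately show ?thesis by blast
      next
        case rm
        have e1: "p (t-1-k) = (?j + k) mod d" using pos[of "t-1-k" k] rm t by simp
        have e2: "p (t-2-k) = (p (t-1-k) + 1) mod d" using bw[rule_format, of "t-2-k"] rm t
          by (simp add: Suc_diff_Suc numeral_eq_Suc)
        have "x = f ` {t-2-k, t-2-k+1}"
          using e1 e2 fp[of "t-1-k"] fp[of "t-2-k"] rm t unfolding rimE_def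
          by (simp add: Suc_diff_Suc numeral_eq_Suc insert_commute)
        moreover have "{t-2-k, t-2-k+1} \<in> fan_edges t" using fan_rm[of "t-2-k" t] rm t by simp
        ultimately show ?thesis by blast
      qed
    qed
    moreover have "?j < d" using fp[of "t-1"] t by simp
    ultimately show ?thesis using as by blast
  qed
qed

lemma no_InlInl: "{Inl a, Inl b} \<notin> hubbed_wheel d s"
  unfolding hubbed_wheel_def by (auto simp: doubleton_eq_iff)

lemma rim_center_false:
  assumes inj: "inj_on f {..<t}" and cp: "\<forall>e\<in>fan_edges t. f ` e \<in> hubbed_wheel d s"
    and t: "3 \<le> t" and f0: "f 0 = Inr v" and st: "s + 4 \<le> t \<or> 7 \<le> t"
  shows False
proof -
  note ce = copy_edges[OF cp t]
  let ?R = "{w. w < d \<and> cadj d v w}"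
  have nb: "f i \<in> Inl ` {..<s} \<union> Inr ` ?R" if "1 \<le> i" "i < t" for i
  proof -
    have "(\<exists>b<s. f i = Inl b) \<or> (\<exists>w. f i = Inr w \<and> w < d \<and> v < d \<and> cadj d v w)"
      using nbr_Inr[of v "f i" d s] ce(1)[OF that] f0 by simp
    then show ?thesis by force
  qed
  have vd: "v < d"
  proof -
    have "{Inr v, f 1} \<in> hubbed_wheel d s" using ce(1)[of 1] t f0 by simp
    then show ?thesis using E_cases[of "Inr v" "f 1" d s] by auto
  qed
  have cR: "card ?R \<le> 2" using card_R vd by blast
  have finR: "finite ?R" by simp
  from st show False
  proof
    assume st1: "s + 4 \<le> t"
    have "f ` {1..<t} \<subseteq> Inl ` {..<s} \<union> Inr ` ?R" by (intro image_subsetI nb) auto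
    then have "card (f ` {1..<t}) \<le> card (Inl ` {..<s} \<union> Inr ` ?R)"
      by (intro card_mono) (use finR in auto)
    also have "\<dots> \<le> card (Inl ` {..<s} :: (nat+nat) set) + card (Inr ` ?R :: (nat+nat) set)" by (rule card_Un_le)
    also have "\<dots> \<le> s + 2"
    proof -
      have "card (Inl ` {..<s} :: (nat+nat) set) \<le> s" using card_image_le[of "{..<s}" "Inl :: nat \<Rightarrow> nat + nat"] by simp
      moreover have "card (Inr ` ?R :: (nat+nat) set) \<le> 2" using cR card_image_le[OF finR, of "Inr :: nat \<Rightarrow> nat + nat"] by simp
      ultimately show ?thesis by simp
    qed
    finally have "card (f ` {1..<t}) \<le> s + 2" .
    moreover have "card (f ` {1..<t}) = t - 1"
    proof -
      have "{1..<t} \<subseteq> {..<t}" by auto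
      then show ?thesis using card_image[OF inj_on_subset[OF inj, of "{1..<t}"]] by simp
    qed
    ultimately show False using st1 by simp
  next
    assume t7: "7 \<le> t"
    have pair: "\<exists>x w. (x = i \<or> x = j) \<and> w \<in> ?R \<and> f x = Inr w" if "1 \<le> i" "j = i + 1" "j < t" for i j
    proof -
      have e: "{f i, f (i+1)} \<in> hubbed_wheel d s" using ce(2)[of i] that by simp
      have n1: "f i \<in> Inl ` {..<s} \<union> Inr ` ?R" using nb that by simp
      have n2: "f (i+1) \<in> Inl ` {..<s} \<union> Inr ` ?R" using nb that by simp
      have jj: "j = i + 1" by (rule that(2))
      show ?thesis
      proof (cases "f i \<in> Inl ` {..<s}")
        case True
        show ?thesis
        proof (cases "f (i+1) \<in> Inl ` {..<s}")
          case True2: True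
          then show ?thesis using True e no_InlInl by auto
        next
          case False then show ?thesis using n2 jj by auto
        qed
      next
        case False then show ?thesis using n1 by auto
      qed
    qed
    obtain x1 w1 where p1: "x1 = 1 \<or> x1 = 2" "w1 \<in> ?R" "f x1 = Inr w1" using pair[of 1 2] t7 by auto
    obtain x2 w2 where p2: "x2 = 3 \<or> x2 = 4" "w2 \<in> ?R" "f x2 = Inr w2" using pair[of 3 4] t7 by auto
    obtain x3 w3 where p3: "x3 = 5 \<or> x3 = 6" "w3 \<in> ?R" "f x3 = Inr w3" using pair[of 5 6] t7 by auto
    have d12: "w1 \<noteq> w2" using p1 p2 inj_on_contraD[OF inj, of x1 x2] t7 by auto
    have d13: "w1 \<noteq> w3" using p1 p3 inj_on_contraD[OF inj, of x1 x3] t7 by auto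
    have d23: "w2 \<noteq> w3" using p2 p3 inj_on_contraD[OF inj, of x2 x3] t7 by auto
    have "card {w1, w2, w3} \<le> card ?R" using p1 p2 p3 by (intro card_mono finR) auto
    moreover have "card {w1, w2, w3} = 3" using d12 d13 d23 by simp
    ultimately show False using cR by simp
  qed
qed

lemma three_le_four: "3 \<le> (4::nat)" by simp

definition sw :: "nat \<Rightarrow> nat" where "sw x = (if x = 0 then 2 else if x = 2 then 0 else x)"

lemma sw_fan: assumes "e \<in> fan_edges 4" shows "sw ` e \<in> fan_edges 4"
  using assms three_le_four
proof (cases rule: fan_cases)
  case (sp i)
  then have "i = 1 \<or> i = 2 \<or> i = 3" by auto
  then show ?thesis
  proof (elim disjE)
    assume "i = 1" then have "sw ` e = {1, 1+1}" using sp by (auto simp: sw_def)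
    then show ?thesis using fan_rm[of 1 4] by simp
  next
    assume "i = 2" then have "sw ` e = {0, 2}" using sp by (auto simp: sw_def)
    then show ?thesis using fan_sp[of 2 4] by simp
  next
    assume "i = 3" then have "sw ` e = {2, 2+1}" using sp by (auto simp: sw_def)
    then show ?thesis using fan_rm[of 2 4] by simp
  qed
next
  case (rm i)
  then have "i = 1 \<or> i = 2" by auto
  then show ?thesis
  proof (elim disjE)
    assume "i = 1" then have "sw ` e = {0, 1}" using rm by (auto simp: sw_def)
    then show ?thesis using fan_sp[of 1 4] by simp
  next
    assume "i = 2" then have "sw ` e = {0, 3}" using rm by (auto simp: sw_def)
    then show ?thesis using fan_sp[of 3 4] by simp
  qed
qed

lemma t4_case:
  assumes inj: "inj_on f {..<4}" and cp: "\<forall>e\<in>fan_edges 4. f ` e \<in> hubbed_wheel d 1"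
    and d: "4 \<le> d" and f0: "f 0 = Inr v"
  shows "\<exists>j<d. win d 2 0 j \<subseteq> (\<lambda>e. f ` e) ` fan_edges 4"
proof -
  have t: "3 \<le> (4::nat)" by simp
  note ce = copy_edges[OF cp t]
  let ?R = "{w. w < d \<and> cadj d v w}"
  have nb': "f i = Inl 0 \<or> (\<exists>w. f i = Inr w \<and> w < d \<and> cadj d v w)" if "1 \<le> i" "i < 4" for i
  proof -
    have "(\<exists>b<1. f i = Inl b) \<or> (\<exists>w. f i = Inr w \<and> w < d \<and> v < d \<and> cadj d v w)"
      using nbr_Inr[of v "f i" d 1] ce(1)[OF that] f0 by simp
    then show ?thesis by auto
  qed
  have vd: "v < d"
  proof -
    have "{Inr v, f 1} \<in> hubbed_wheel d 1" using ce(1)[of 1] f0 by simp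
    then show ?thesis using E_cases[of "Inr v" "f 1" d 1] by auto
  qed
  have f2: "f 2 = Inl 0"
  proof (rule ccontr)
    assume "f 2 \<noteq> Inl 0"
    then obtain w where w: "f 2 = Inr w" "w < d" "cadj d v w" using nb'[of 2] by auto
    have f13: "f 1 \<noteq> f 3" using inj_on_contraD[OF inj, of 1 3] by simp
    obtain x u where xu: "x = 1 \<or> x = 3" "f x = Inr u" "u < d" "cadj d v u"
    proof (cases "f 1 = Inl 0")
      case True
      then have "f 3 \<noteq> Inl 0" using f13 by simp
      then obtain u where "f 3 = Inr u" "u < d" "cadj d v u" using nb'[of 3] by auto
      then show ?thesis using that[of 3 u] by simp
    next
      case False
      then obtain u where "f 1 = Inr u" "u < d" "cadj d v u" using nb'[of 1] by auto
      then show ?thesis using that[of 1 u] by simp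
    qed
    have e12: "{f 1, f 2} \<in> hubbed_wheel d 1" using ce(2)[of 1] by (simp add: numeral_2_eq_2)
    have e23: "{f 2, f 3} \<in> hubbed_wheel d 1" using ce(2)[of 2] by simp
    have "{f x, f 2} \<in> hubbed_wheel d 1"
      using xu(1)
    proof
      assume "x = 1" then show ?thesis using e12 by simp
    next
      assume "x = 3" then show ?thesis using e23 by (simp add: insert_commute)
    qed
    then have "{Inr u, Inr w} \<in> hubbed_wheel d 1" using xu(2) w(1) by simp
    then have cuw: "cadj d u w" using adj_InrInr[of u w d 1] unfolding cadj_def by blast
    have uw: "u \<noteq> w"
    proof -
      have "f x \<noteq> f 2" using inj_on_contraD[OF inj, of x 2] xu(1) by auto
      then show ?thesis using xu w by auto
    qed
    show False by (rule no_tri[OF d xu(3) vd w(2) uw xu(4) w(3) cuw])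
  qed
  define g where "g = f \<circ> sw"
  have swr: "sw ` {..<4} \<subseteq> {..<4}"
  proof (rule image_subsetI)
    fix x :: nat assume "x \<in> {..<4}" then show "sw x \<in> {..<4}" unfolding sw_def by simp
  qed
  have swsw: "sw (sw x) = x" for x unfolding sw_def by simp
  have injsw: "inj_on sw {..<4}" by (rule inj_on_inverseI[of _ sw]) (rule swsw)
  have injg: "inj_on g {..<4}" unfolding g_def
    by (rule comp_inj_on[OF injsw]) (rule inj_on_subset[OF inj swr])
  have gimg: "g ` e = f ` (sw ` e)" for e unfolding g_def by (simp add: image_comp)
  have cpg: "\<forall>e\<in>fan_edges 4. g ` e \<in> hubbed_wheel d 1"
  proof
    fix e assume e: "e \<in> fan_edges 4"
    show "g ` e \<in> hubbed_wheel d 1" unfolding gimg using cp sw_fan[OF e] by blast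
  qed
  have g0: "g 0 = Inl 0" using f2 unfolding g_def sw_def by simp
  have hc: "0 < (1::nat) \<and> (\<exists>j<d. win d (4-2) 0 j \<subseteq> (\<lambda>e. g ` e) ` fan_edges 4)"
    by (rule hub_case[OF injg cpg t g0])
  then obtain j where j: "j < d" "win d (4-2) 0 j \<subseteq> (\<lambda>e. g ` e) ` fan_edges 4"
    by blast
  have gf: "(\<lambda>e. g ` e) ` fan_edges 4 \<subseteq> (\<lambda>e. f ` e) ` fan_edges 4"
  proof (rule image_subsetI)
    fix e assume e: "e \<in> fan_edges 4"
    show "g ` e \<in> (\<lambda>e. f ` e) ` fan_edges 4" unfolding gimg by (rule imageI) (rule sw_fan[OF e])
  qed
  have j2: "win d 2 0 j \<subseteq> (\<lambda>e. g ` e) ` fan_edges 4" using j(2) by simp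
  have "win d 2 0 j \<subseteq> (\<lambda>e. f ` e) ` fan_edges 4" by (rule subset_trans[OF j2 gf])
  then show ?thesis using j(1) by (intro exI[of _ j]) simp
qed

definition caseST :: "nat \<Rightarrow> nat \<Rightarrow> bool" where
  "caseST s t \<longleftrightarrow> (s = 1 \<and> 4 \<le> t) \<or> (s = 2 \<and> 6 \<le> t) \<or> (3 \<le> s \<and> 7 \<le> t)"

lemma copy_win:
  assumes inj: "inj_on f {..<t}" and cp: "\<forall>e\<in>fan_edges t. f ` e \<in> hubbed_wheel d s"
    and cs: "caseST s t" and d: "4 \<le> d"
  shows "\<exists>a<s. \<exists>j<d. win d (t-2) a j \<subseteq> (\<lambda>e. f ` e) ` fan_edges t"
proof (cases "f 0")
  case (Inl a)
  have t: "3 \<le> t" using cs unfolding caseST_def by auto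
  then show ?thesis using hub_case[OF inj cp t Inl] by blast
next
  case (Inr v)
  show ?thesis
  proof (cases "s = 1 \<and> t = 4")
    case True
    then have "\<exists>j<d. win d 2 0 j \<subseteq> (\<lambda>e. f ` e) ` fan_edges 4"
      using t4_case[of f d v] inj cp d Inr by simp
    then show ?thesis using True by auto
  next
    case False
    then have "s + 4 \<le> t \<or> 7 \<le> t" "3 \<le> t" using cs unfolding caseST_def by auto
    then show ?thesis using rim_center_false[OF inj cp _ Inr] by blast
  qed
qed

lemma rainbow_win:
  assumes "has_rainbow_copy (hubbed_wheel d s) c (fan_vertices t) (fan_edges t)"
    and cs: "caseST s t" and d: "4 \<le> d"
  shows "\<exists>a<s. \<exists>j<d. inj_on c (win d (t-2) a j)"
proof -
  obtain f where f: "inj_on f {..<t}" "\<forall>e\<in>fan_edges t. f ` e \<in> hubbed_wheel d s"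
    "inj_on (\<lambda>e. c (f ` e)) (fan_edges t)"
    using assms(1) unfolding has_rainbow_copy_def fan_vertices_def by blast
  obtain a j where aj: "a < s" "j < d" "win d (t-2) a j \<subseteq> (\<lambda>e. f ` e) ` fan_edges t"
    using copy_win[OF f(1,2) cs d] by blast
  have "inj_on c ((\<lambda>e. f ` e) ` fan_edges t)"
  proof (rule inj_onI)
    fix x y assume "x \<in> (\<lambda>e. f ` e) ` fan_edges t" "y \<in> (\<lambda>e. f ` e) ` fan_edges t" "c x = c y"
    then obtain ex ey where "ex \<in> fan_edges t" "ey \<in> fan_edges t" "x = f ` ex" "y = f ` ey" "c (f ` ex) = c (f ` ey)"
      by auto
    then have "ex = ey" using inj_onD[OF f(3)] by simp
    then show "x = y" using \<open>x = f ` ex\<close> \<open>y = f ` ey\<close> by simp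
  qed
  then have "inj_on c (win d (t-2) a j)" using inj_on_subset[OF _ aj(3)] by blast
  then show ?thesis using aj(1,2) by blast
qed

lemma ceil_facts:
  fixes d W :: nat assumes "0 < W"
  defines "q \<equiv> (d + W - 1) div W"
  shows "d \<le> q * W" "(q - 1) * W < d \<or> d = 0"
proof -
  have e: "d + W - 1 = q * W + (d + W - 1) mod W" unfolding q_def by simp
  have r: "(d + W - 1) mod W < W" using assms by simp
  show "d \<le> q * W" using e r by linarith
  show "(q - 1) * W < d \<or> d = 0"
  proof (cases "d = 0")
    case False
    have "q * W \<le> d + W - 1" using e by linarith
    then have "q * W - W < d" using False by linarith
    then show ?thesis by (simp add: diff_mult_distrib)
  qed simp
qed

lemma round_up:
  fixes j W :: nat assumes "0 < W"
  shows "j \<le> ((j + W - 1) div W) * W \<and> ((j + W - 1) div W) * W \<le> j + W - 1"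
proof -
  let ?k = "(j + W - 1) div W"
  have e: "j + W - 1 = ?k * W + (j + W - 1) mod W" by simp
  have r: "(j + W - 1) mod W < W" using assms by simp
  show ?thesis using e r by linarith
qed

definition colr :: "nat \<Rightarrow> nat \<Rightarrow> (nat \<Rightarrow> nat) \<Rightarrow> (nat+nat) set \<Rightarrow> nat" where
  "colr d s g e = g (inv_into {..<(s+1)*d} (nu d) e)"

lemma colr_nu: assumes "3 \<le> d" "n < (s+1)*d" shows "colr d s g (nu d n) = g n"
  unfolding colr_def using inv_into_f_f[OF nu_inj[OF assms(1), of s]] assms(2) by simp

lemma colr_img: assumes "3 \<le> d" shows "colr d s g ` hubbed_wheel d s = g ` {..<(s+1)*d}"
proof -
  have "colr d s g ` hubbed_wheel d s = colr d s g ` nu d ` {..<(s+1)*d}" using nu_image[of d s] assms by simp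
  also have "\<dots> = g ` {..<(s+1)*d}" using colr_nu[OF assms] by (auto simp: image_image)
  finally show ?thesis .
qed

lemma card_g_ge:
  assumes "\<forall>n<N. n \<notin> X \<longrightarrow> g n = n" "finite X"
  shows "N - card X \<le> card (g ` {..<N})"
proof -
  have "{..<N} - X \<subseteq> g ` {..<N}" using assms(1) by (auto intro: rev_image_eqI)
  then have "card ({..<N} - X) \<le> card (g ` {..<N})" by (intro card_mono) auto
  moreover have "N - card X \<le> card ({..<N} - X)"
    using diff_card_le_card_Diff[OF assms(2), of "{..<N}"] by simp
  ultimately show ?thesis by simp
qed

definition P1 :: "nat \<Rightarrow> nat \<Rightarrow> nat set" where "P1 T q = (\<lambda>k. k * T) ` {..<q}"
definition g1 :: "nat \<Rightarrow> nat set \<Rightarrow> nat \<Rightarrow> nat" where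
  "g1 d P n = (if d \<le> n \<and> n - d \<in> P then n - d else n)"

lemma cover1:
  assumes T: "1 \<le> T" and q: "d \<le> q * T" and j: "j < d"
  shows "\<exists>p\<in>P1 T q. p < d \<and> (\<exists>k<T. (j + k) mod d = p)"
proof (cases "j + T \<le> d")
  case True
  let ?k0 = "(j + T - 1) div T"
  have ru: "j \<le> ?k0 * T" "?k0 * T \<le> j + T - 1" using round_up[of T j] T by auto
  have "?k0 < q"
  proof (rule ccontr)
    assume "\<not> ?k0 < q" then have "q \<le> ?k0" by simp
    then have "q * T \<le> ?k0 * T" by (rule mult_le_mono1)
    then show False using ru q True T by linarith
  qed
  then have "?k0 * T \<in> P1 T q" unfolding P1_def by auto
  moreover have "(j + (?k0 * T - j)) mod d = ?k0 * T"
  proof -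
    have "?k0 * T < d" using ru True T by linarith
    then show ?thesis using ru by simp
  qed
  moreover have "?k0 * T - j < T" "?k0 * T < d" using ru True T by linarith+
  ultimately show ?thesis by blast
next
  case False
  have q0: "0 < q" using q j by (cases q) auto
  have "0 \<in> P1 T q" unfolding P1_def using q0 by (auto intro: image_eqI[of _ _ 0])
  moreover have "(j + (d - j)) mod d = 0" using j by simp
  moreover have "d - j < T" using False j by linarith
  ultimately show ?thesis using j by (intro bexI[of _ 0]) auto
qed

lemma constr1:
  assumes d: "3 \<le> d" and T: "1 \<le> T" and q: "d \<le> q * T" and j: "j < d"
  shows "\<exists>e1 e2. e1 \<in> win d T 0 j \<and> e2 \<in> win d T 0 j \<and> e1 \<noteq> e2 \<and>
           colr d 1 (g1 d (P1 T q)) e1 = colr d 1 (g1 d (P1 T q)) e2"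
proof -
  obtain p k where p: "p \<in> P1 T q" "p < d" "k < T" "(j + k) mod d = p" using cover1[OF T q j] by blast
  have "spk 0 p \<in> win d T 0 j" unfolding win_def using p by (intro UnI1 image_eqI[of _ _ k]) auto
  moreover have "rimE d p \<in> win d T 0 j" unfolding win_def using p by (intro UnI2 image_eqI[of _ _ k]) auto
  moreover have "colr d 1 (g1 d (P1 T q)) (spk 0 p) = p"
  proof -
    have "nu d (d + p) = spk 0 p" unfolding nu_def using p by simp
    then show ?thesis using colr_nu[OF d, of "d+p" 1] p unfolding g1_def by simp
  qed
  moreover have "colr d 1 (g1 d (P1 T q)) (rimE d p) = p"
  proof -
    have "nu d p = rimE d p" unfolding nu_def using p by simp
    then show ?thesis using colr_nu[OF d, of p 1] p unfolding g1_def by simp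
  qed
  ultimately show ?thesis by (intro exI[of _ "spk 0 p"] exI[of _ "rimE d p"]) simp
qed

lemma card1:
  assumes d: "3 \<le> d"
  shows "(1+1)*d - q \<le> card (colr d 1 (g1 d (P1 T q)) ` hubbed_wheel d 1)"
proof -
  have eq: "colr d 1 (g1 d (P1 T q)) ` hubbed_wheel d 1 = g1 d (P1 T q) ` {..<(1+1)*d}"
    by (rule colr_img[OF d])
  have A: "(1+1)*d - card ((\<lambda>p. d + p) ` P1 T q) \<le> card (g1 d (P1 T q) ` {..<(1+1)*d})"
  proof (rule card_g_ge)
    show "\<forall>n<(1+1)*d. n \<notin> (\<lambda>p. d + p) ` P1 T q \<longrightarrow> g1 d (P1 T q) n = n"
    proof (intro allI impI)
      fix n assume n: "n \<notin> (\<lambda>p. d + p) ` P1 T q"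
      show "g1 d (P1 T q) n = n"
      proof (cases "d \<le> n \<and> n - d \<in> P1 T q")
        case True
        then have "n = d + (n - d)" by simp
        then have "n \<in> (\<lambda>p. d + p) ` P1 T q" using True by (metis image_eqI)
        then show ?thesis using n by simp
      next
        case False then show ?thesis by (auto simp: g1_def)
      qed
    qed
  qed (simp add: P1_def)
  have B: "card ((\<lambda>p. d + p) ` P1 T q) \<le> q"
  proof -
    have "card ((\<lambda>p. d + p) ` P1 T q) \<le> card (P1 T q)" by (rule card_image_le) (simp add: P1_def)
    also have "\<dots> \<le> card {..<q}" unfolding P1_def by (rule card_image_le) simp
    finally show ?thesis by simp
  qed
  show ?thesis unfolding eq using le_trans[OF diff_le_mono2[OF B] A] .
qed

definition P2 :: "nat \<Rightarrow> nat \<Rightarrow> nat \<Rightarrow> nat set" where "P2 d W q = (\<lambda>k. min (k * W) (d - 2)) ` {..<q}"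
definition g2 :: "nat \<Rightarrow> nat set \<Rightarrow> nat \<Rightarrow> nat" where
  "g2 d P n = (if 1 \<le> n \<and> n < d \<and> n - 1 \<in> P then n - 1 else n)"

lemma P2_sub: "x \<in> P2 d W q \<Longrightarrow> x \<le> d - 2" unfolding P2_def by auto

lemma P2_spacing:
  assumes W: "3 \<le> W" and q: "(q - 1) * W < d" and x: "x \<in> P2 d W q" and x1: "x + 1 \<in> P2 d W q"
  shows False
proof -
  obtain k1 where k1: "k1 < q" "x = min (k1 * W) (d - 2)" using x unfolding P2_def by auto
  obtain k2 where k2: "k2 < q" "x + 1 = min (k2 * W) (d - 2)" using x1 unfolding P2_def by auto
  have xl: "x + 1 \<le> d - 2" using k2 by simp
  then have x1e: "x = k1 * W" using k1 by (simp add: min_def split: if_splits)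
  have b2: "k2 * W \<le> d - 1"
  proof -
    have "k2 \<le> q - 1" using k2 by simp
    then have "k2 * W \<le> (q - 1) * W" by (rule mult_le_mono1)
    then show ?thesis using q by linarith
  qed
  have "k2 * W = x + 1 \<or> (k2 * W = d - 1 \<and> x + 1 = d - 2)" using k2 b2 by (auto simp: min_def split: if_splits)
  then have "k2 * W = k1 * W + 1 \<or> k2 * W = k1 * W + 2" using x1e xl by auto
  moreover have "k2 * W \<le> k1 * W \<or> k1 * W + W \<le> k2 * W"
  proof (cases "k2 \<le> k1")
    case True then show ?thesis by (simp add: mult_le_mono1)
  next
    case False then have "Suc k1 \<le> k2" by simp
    then have "Suc k1 * W \<le> k2 * W" by (rule mult_le_mono1)
    then show ?thesis by simp
  qed
  ultimately show False using W by linarith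
qed

lemma cover2:
  assumes T: "4 \<le> T" and q: "d \<le> q * (T-1)" and j: "j < d" and dT: "T + 2 \<le> d"
  shows "\<exists>p\<in>P2 d (T-1) q. p + 1 < d \<and> (\<exists>k. k + 1 < T \<and> (j + k) mod d = p)"
proof -
  let ?W = "T - 1"
  have W0: "0 < ?W" using T by simp
  show ?thesis
  proof (cases "j + T \<le> d")
    case True
    let ?k0 = "(j + ?W - 1) div ?W"
    have ru: "j \<le> ?k0 * ?W" "?k0 * ?W \<le> j + ?W - 1" using round_up[OF W0, of j] by auto
    have "?k0 < q"
    proof (rule ccontr)
      assume "\<not> ?k0 < q" then have "q \<le> ?k0" by simp
      then have "q * ?W \<le> ?k0 * ?W" by (rule mult_le_mono1)
      then show False using ru q True T by linarith
    qed
    moreover have "?k0 * ?W \<le> d - 2" using ru True T by linarith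
    ultimately have "?k0 * ?W \<in> P2 d ?W q" unfolding P2_def by (auto intro!: image_eqI[of _ _ ?k0])
    moreover have "(j + (?k0 * ?W - j)) mod d = ?k0 * ?W"
    proof -
      have "?k0 * ?W < d" using ru True T by linarith
      then show ?thesis using ru by simp
    qed
    moreover have "?k0 * ?W - j + 1 < T" "?k0 * ?W + 1 < d" using ru True T by linarith+
    ultimately show ?thesis by blast
  next
    case False
    show ?thesis
    proof (cases "j + T = d + 1")
      case True
      have q0: "0 < q" using q j by (cases q) auto
      let ?p = "min ((q - 1) * ?W) (d - 2)"
      have "?p \<in> P2 d ?W q" unfolding P2_def using q0 by (intro image_eqI[of _ _ "q-1"]) auto
      moreover have "j \<le> ?p"
      proof -
        have "q * ?W = (q - 1) * ?W + ?W" using q0 by (metis Suc_diff_1 add.commute mult_Suc)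
        then have "d - ?W \<le> (q - 1) * ?W" using q by linarith
        then have "j \<le> (q - 1) * ?W" "j \<le> d - 2" using True T by linarith+
        then show ?thesis by (simp add: min_def)
      qed
      moreover have "?p + 1 < d" using dT by simp
      moreover have "?p - j + 1 < T"
      proof -
        have pd: "?p \<le> d - 2" by (rule min.cobounded2)
        then have "?p + 1 < j + T" using True dT by linarith
        then show ?thesis using \<open>j \<le> ?p\<close> by linarith
      qed
      moreover have "(j + (?p - j)) mod d = ?p" using \<open>j \<le> ?p\<close> dT by simp
      ultimately show ?thesis by blast
    next
      case F2: False
      then have big: "d + 2 \<le> j + T" using False by linarith
      have q0: "0 < q" using q j by (cases q) auto
      have "0 \<in> P2 d ?W q" unfolding P2_def using q0 by (intro image_eqI[of _ _ 0]) auto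
      moreover have "(j + (d - j)) mod d = 0" using j by simp
      moreover have "d - j + 1 < T" using big j by linarith
      ultimately show ?thesis using dT by (intro bexI[of _ 0]) auto
    qed
  qed
qed

lemma constr2:
  assumes d: "3 \<le> d" and T: "4 \<le> T" and q: "d \<le> q * (T-1)" "(q - 1) * (T-1) < d" and j: "j < d"
    and dT: "T + 2 \<le> d" and a: "a < s"
  shows "\<exists>e1 e2. e1 \<in> win d T a j \<and> e2 \<in> win d T a j \<and> e1 \<noteq> e2 \<and>
           colr d s (g2 d (P2 d (T-1) q)) e1 = colr d s (g2 d (P2 d (T-1) q)) e2"
proof -
  let ?P = "P2 d (T-1) q"
  obtain p k where p: "p \<in> ?P" "p + 1 < d" "k + 1 < T" "(j + k) mod d = p" using cover2[OF T q(1) j dT] by blast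
  have k1: "(j + (k+1)) mod d = p + 1"
  proof -
    have "((j + k) mod d + 1) mod d = (j + k + 1) mod d" by (rule modsuc)
    then show ?thesis using p by simp
  qed
  have "rimE d p \<in> win d T a j" unfolding win_def using p by (intro UnI2 image_eqI[of _ _ k]) auto
  moreover have "rimE d (p+1) \<in> win d T a j" unfolding win_def using p k1 by (intro UnI2 image_eqI[of _ _ "k+1"]) auto
  moreover have "rimE d p \<noteq> rimE d (p+1)" using rim_eq[OF d, of p "p+1"] p by simp
  moreover have "colr d s (g2 d ?P) (rimE d p) = p"
  proof -
    have nsp: "p - 1 \<notin> ?P" if "1 \<le> p"
    proof
      assume pm: "p - 1 \<in> ?P"
      have W3: "3 \<le> T - 1" using T by simp
      have "p - 1 + 1 \<in> ?P" using p that by simp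
      then show False using P2_spacing[OF W3 q(2) pm] by simp
    qed
    have "nu d p = rimE d p" unfolding nu_def using p by simp
    moreover have "p < (s+1)*d" using p by simp
    ultimately show ?thesis using colr_nu[OF d, of p s] nsp unfolding g2_def by auto
  qed
  moreover have "colr d s (g2 d ?P) (rimE d (p+1)) = p"
  proof -
    have "nu d (p+1) = rimE d (p+1)" unfolding nu_def using p by simp
    moreover have "p + 1 < (s+1)*d" using p by simp
    ultimately show ?thesis using colr_nu[OF d, of "p+1" s] p unfolding g2_def by simp
  qed
  ultimately show ?thesis by (intro exI[of _ "rimE d p"] exI[of _ "rimE d (p+1)"]) simp
qed

lemma card2:
  assumes d: "3 \<le> d"
  shows "(s+1)*d - q \<le> card (colr d s (g2 d (P2 d W q)) ` hubbed_wheel d s)"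
proof -
  have eq: "colr d s (g2 d (P2 d W q)) ` hubbed_wheel d s = g2 d (P2 d W q) ` {..<(s+1)*d}"
    using colr_img[OF d, of s] by simp
  have A: "(s+1)*d - card (Suc ` P2 d W q) \<le> card (g2 d (P2 d W q) ` {..<(s+1)*d})"
  proof (rule card_g_ge)
    show "\<forall>n<(s+1)*d. n \<notin> Suc ` P2 d W q \<longrightarrow> g2 d (P2 d W q) n = n"
    proof (intro allI impI)
      fix n assume n: "n \<notin> Suc ` P2 d W q"
      show "g2 d (P2 d W q) n = n"
      proof (cases "1 \<le> n \<and> n < d \<and> n - 1 \<in> P2 d W q")
        case True
        then have "n = Suc (n - 1)" by simp
        then have "n \<in> Suc ` P2 d W q" using True by (metis image_eqI)
        then show ?thesis using n by simp
      next
        case False then show ?thesis by (auto simp: g2_def)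
      qed
    qed
  qed (simp add: P2_def)
  have B: "card (Suc ` P2 d W q) \<le> q"
  proof -
    have "card (Suc ` P2 d W q) \<le> card (P2 d W q)" by (rule card_image_le) (simp add: P2_def)
    also have "\<dots> \<le> card {..<q}" unfolding P2_def by (rule card_image_le) simp
    finally show ?thesis by simp
  qed
  show ?thesis unfolding eq using le_trans[OF diff_le_mono2[OF B] A] .
qed

lemma fl_lemma:
  fixes M d q W :: nat
  assumes W: "0 < W" and q1: "d \<le> q * W" and q2: "(q - 1) * W < d" and q0: "1 \<le> q"
  shows "\<lfloor>real M - real d / real W\<rfloor> = int M - int q"
proof (rule floor_unique)
  have "real d \<le> real (q * W)" using q1 by (simp only: of_nat_le_iff)
  then have "real d \<le> real q * real W" by simp
  then have "real d / real W \<le> real q" using W by (simp add: divide_le_eq)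
  then show "real_of_int (int M - int q) \<le> real M - real d / real W" by simp
  have "real ((q - 1) * W) < real d" using q2 by (simp only: of_nat_less_iff)
  then have "real (q - 1) * real W < real d" by simp
  then have "(real q - 1) * real W < real d" using q0 by (simp add: of_nat_diff)
  then have "real q - 1 < real d / real W" using W by (simp add: less_divide_eq)
  then show "real M - real d / real W < real_of_int (int M - int q) + 1" by simp
qed

lemma rb_value:
  assumes cs: "caseST s t" and dt: "3 * t \<le> d + 5"
  defines "W \<equiv> (if s = 1 then t - 2 else t - 3)"
  defines "q \<equiv> (d + W - 1) div W"
  shows "rainbow_number (hubbed_wheel d s) (fan_vertices t) (fan_edges t) = (s+1)*d - q + 1"
    and "d \<le> q * W" "(q - 1) * W < d" "1 \<le> q" "q \<le> (s+1)*d" "0 < W"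
proof -
  define T where "T = t - 2"
  have t4: "4 \<le> t" and s1: "1 \<le> s" using cs unfolding caseST_def by auto
  have T2: "2 \<le> T" using t4 unfolding T_def by simp
  have d3T: "3 * T + 1 \<le> d" using dt t4 unfolding T_def by simp
  have d7: "7 \<le> d" using d3T T2 by simp
  have WT: "W = (if s = 1 then T else T - 1)" unfolding W_def T_def by simp
  have W0: "0 < W" using WT T2 cs unfolding caseST_def by auto
  show "0 < W" by (rule W0)
  have qf: "d \<le> q * W" "(q - 1) * W < d \<or> d = 0" using ceil_facts[OF W0, of d] unfolding q_def by auto
  show "d \<le> q * W" by (rule qf(1))
  show q2: "(q - 1) * W < d" using qf(2) d7 by simp
  show q1: "1 \<le> q" using qf(1) d7 by (cases q) auto
  have qd: "q \<le> d"
  proof -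
    have "q - 1 < d"
    proof (rule ccontr)
      assume "\<not> q - 1 < d" then have "d \<le> q - 1" by simp
      then have "d * 1 \<le> (q - 1) * W" using W0 by (intro mult_le_mono) auto
      then show False using q2 by simp
    qed
    then show ?thesis by simp
  qed
  then show qN: "q \<le> (s+1)*d" by simp
  have cT: "condT d s T"
  proof -
    have a: "(T+1)*T \<le> (T-1)*d"
    proof -
      obtain m where m: "T = m + 2" using T2 by (intro that[of "T - 2"]) simp
      have "(T-1)*(3*T+1) \<le> (T-1)*d" using d3T by (rule mult_le_mono2)
      moreover have "(T+1)*T \<le> (T-1)*(3*T+1)" unfolding m by (simp add: algebra_simps)
      ultimately show ?thesis by linarith
    qed
    have b: "3 \<le> T \<and> T*(T-1) \<le> (T-2)*d" if "2 \<le> s"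
    proof -
      have T4: "4 \<le> T" using that cs unfolding caseST_def T_def by auto
      obtain m where m: "T = m + 3" using T4 by (intro that[of "T - 3"]) simp
      have "(T-2)*(3*T+1) \<le> (T-2)*d" using d3T by (rule mult_le_mono2)
      moreover have "T*(T-1) \<le> (T-2)*(3*T+1)" unfolding m by (simp add: algebra_simps)
      ultimately show ?thesis using T4 by linarith
    qed
    show ?thesis unfolding condT_def using a b d7 d3T T2 by auto
  qed
  have Bn: "Bnd s T = s * W" unfolding Bnd_def WT by simp
  let ?E = "hubbed_wheel d s"
  let ?N = "(s+1)*d"
  have cE: "card ?E = ?N" using card_E d7 by simp
  let ?P = "\<lambda>k. \<forall>c :: (nat+nat) set \<Rightarrow> nat. card (c ` ?E) \<ge> k \<longrightarrow> has_rainbow_copy ?E c (fan_vertices t) (fan_edges t)"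
  have up: "?P (?N - q + 1)"
  proof (intro allI impI)
    fix c :: "(nat+nat) set \<Rightarrow> nat" assume K: "?N - q + 1 \<le> card (c ` ?E)"
    show "has_rainbow_copy ?E c (fan_vertices t) (fan_edges t)"
    proof (rule ccontr)
      assume nc: "\<not> ?thesis"
      have nr: "\<forall>a<s. \<forall>j<d. \<exists>e1 e2. e1 \<in> win d T a j \<and> e2 \<in> win d T a j \<and> e1 \<noteq> e2 \<and> c e1 = c e2"
      proof (intro allI impI)
        fix a j assume a: "a < s" and j: "j < d"
        have "\<not> inj_on c (win d (t-2) a j)"
        proof
          assume "inj_on c (win d (t-2) a j)"
          then have "has_rainbow_copy ?E c (fan_vertices t) (fan_edges t)"
            using win_copy[of t d a s j c] t4 d3T a j unfolding T_def by simp
          then show False using nc by simp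
        qed
        then show "\<exists>e1 e2. e1 \<in> win d T a j \<and> e2 \<in> win d T a j \<and> e1 \<noteq> e2 \<and> c e1 = c e2"
          unfolding inj_on_def T_def by blast
      qed
      have "s * d \<le> Bnd s T * (card ?E - card (c ` ?E))" by (rule loss_bound[OF cT s1 nr])
      then have "s * d \<le> s * (W * (?N - card (c ` ?E)))" using Bn cE by (simp add: mult.assoc)
      then have dl: "d \<le> W * (?N - card (c ` ?E))" using s1 by simp
      have "?N - card (c ` ?E) \<ge> q"
      proof (rule ccontr)
        assume "\<not> ?thesis" then have "?N - card (c ` ?E) \<le> q - 1" by simp
        then have "W * (?N - card (c ` ?E)) \<le> W * (q - 1)" by (rule mult_le_mono2)
        moreover have "W * (q - 1) < d" using q2 by (simp only: mult.commute)
        ultimately show False using dl by linarith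
      qed
      moreover have "card (c ` ?E) \<le> ?N" using card_image_le[OF finite_E, of c d s] cE by simp
      ultimately show False using K qN by linarith
    qed
  qed
  have low: "?N - q + 1 \<le> k" if Pk: "?P k" for k
  proof (rule ccontr)
    assume "\<not> ?thesis" then have kq: "k \<le> ?N - q" by simp
    show False
    proof (cases "s = 1")
      case True
      let ?c = "colr d 1 (g1 d (P1 T q))"
      have "(1+1)*d - q \<le> card (?c ` hubbed_wheel d 1)" by (rule card1) (use d7 in simp)
      then have "k \<le> card (?c ` ?E)" using kq True by simp
      then have "has_rainbow_copy ?E ?c (fan_vertices t) (fan_edges t)" using Pk by blast
      then obtain a j where aj: "a < s" "j < d" "inj_on ?c (win d (t-2) a j)"
        using rainbow_win[OF _ cs, of d ?c] d7 by auto
      have a0: "a = 0" using aj True by simp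
      obtain e1 e2 where e: "e1 \<in> win d T 0 j" "e2 \<in> win d T 0 j" "e1 \<noteq> e2" "?c e1 = ?c e2"
      proof -
        have q': "d \<le> q * T" using qf(1) WT True by simp
        have "3 \<le> d" "1 \<le> T" using d7 T2 by auto
        from constr1[OF this q' aj(2)] show ?thesis using that by blast
      qed
      have "e1 = e2" using inj_onD[OF aj(3) e(4)] e(1,2) a0 unfolding T_def by simp
      then show False using e(3) by simp
    next
      case False
      have T4: "4 \<le> T" using False cs unfolding caseST_def T_def by auto
      have WT1: "W = T - 1" using WT False by simp
      let ?c = "colr d s (g2 d (P2 d (T-1) q))"
      have "?N - q \<le> card (?c ` ?E)" by (rule card2) (use d7 in simp)
      then have "k \<le> card (?c ` ?E)" using kq by simp
      then have "has_rainbow_copy ?E ?c (fan_vertices t) (fan_edges t)" using Pk by blast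
      then obtain a j where aj: "a < s" "j < d" "inj_on ?c (win d (t-2) a j)"
        using rainbow_win[OF _ cs, of d ?c] d7 by auto
      obtain e1 e2 where e: "e1 \<in> win d T a j" "e2 \<in> win d T a j" "e1 \<noteq> e2" "?c e1 = ?c e2"
      proof -
        have q': "d \<le> q * (T-1)" "(q - 1) * (T - 1) < d" using qf(1) q2 WT1 by auto
        have "3 \<le> d" "T + 2 \<le> d" using d7 d3T T2 by auto
        from constr2[OF this(1) T4 q' aj(2) this(2) aj(1)] show ?thesis using that by blast
      qed
      have "e1 = e2" using inj_onD[OF aj(3) e(4)] e(1,2) unfolding T_def by simp
      then show False using e(3) by simp
    qed
  qed
  show "rainbow_number ?E (fan_vertices t) (fan_edges t) = ?N - q + 1"
    unfolding rainbow_number_def by (rule Least_equality[where P = ?P, OF up]) (rule low)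
qed

theorem theorem1p2:
  fixes d s t :: nat
  assumes "d > 0" and "s > 0" and "t > 0" and "int d \<ge> 3 * int t - 5"
  shows "(s = 1 \<and> t \<ge> 4 \<longrightarrow>
           int (rainbow_number (hubbed_wheel d s) (fan_vertices t) (fan_edges t)) =
             \<lfloor>(2 * real t - 5) / (real t - 2) * real d\<rfloor> + 1)
       \<and> (s = 2 \<and> t \<ge> 6 \<longrightarrow>
           int (rainbow_number (hubbed_wheel d s) (fan_vertices t) (fan_edges t)) =
             \<lfloor>(3 * real t - 10) / (real t - 3) * real d\<rfloor> + 1)
       \<and> (s \<ge> 3 \<and> t \<ge> 7 \<longrightarrow>
           int (rainbow_number (hubbed_wheel d s) (fan_vertices t) (fan_edges t)) =
             \<lfloor>((real s + 1) * real t - (3 * real s + 4)) / (real t - 3) * real d\<rfloor> + 1)"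
proof -
  have dt: "3 * t \<le> d + 5" using assms(4) by linarith
  define W where "W = (if s = 1 then t - 2 else t - 3)"
  define q where "q = (d + W - 1) div W"
  have gen: "int (rainbow_number (hubbed_wheel d s) (fan_vertices t) (fan_edges t)) =
      \<lfloor>real ((s+1)*d) - real d / real W\<rfloor> + 1" if cs: "caseST s t"
  proof -
    note rv = rb_value[OF cs dt, folded W_def, folded q_def]
    have "\<lfloor>real ((s+1)*d) - real d / real W\<rfloor> = int ((s+1)*d) - int q"
      by (rule fl_lemma) (use rv in auto)
    then show ?thesis using rv(1) rv(5) by simp
  qed
  show ?thesis
  proof (intro conjI impI)
    assume a: "s = 1 \<and> 4 \<le> t"
    have cs: "caseST s t" using a unfolding caseST_def by simp
    have rW: "real W = real t - 2" using a unfolding W_def by (simp add: of_nat_diff)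
    have "(2 * real t - 5) / (real t - 2) * real d = real ((s+1)*d) - real d / real W"
      using a unfolding rW by (simp add: field_simps)
    then show "int (rainbow_number (hubbed_wheel d s) (fan_vertices t) (fan_edges t)) =
             \<lfloor>(2 * real t - 5) / (real t - 2) * real d\<rfloor> + 1" using gen[OF cs] by simp
  next
    assume a: "s = 2 \<and> 6 \<le> t"
    have cs: "caseST s t" using a unfolding caseST_def by simp
    have rW: "real W = real t - 3" using a unfolding W_def by (simp add: of_nat_diff)
    have "(3 * real t - 10) / (real t - 3) * real d = real ((s+1)*d) - real d / real W"
      using a unfolding rW by (simp add: field_simps)
    then show "int (rainbow_number (hubbed_wheel d s) (fan_vertices t) (fan_edges t)) =
             \<lfloor>(3 * real t - 10) / (real t - 3) * real d\<rfloor> + 1" using gen[OF cs] by simp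
  next
    assume a: "3 \<le> s \<and> 7 \<le> t"
    have cs: "caseST s t" using a unfolding caseST_def by simp
    have rW: "real W = real t - 3" using a unfolding W_def by (simp add: of_nat_diff)
    have "((real s + 1) * real t - (3 * real s + 4)) / (real t - 3) * real d = real ((s+1)*d) - real d / real W"
      using a unfolding rW by (simp add: field_simps)
    then show "int (rainbow_number (hubbed_wheel d s) (fan_vertices t) (fan_edges t)) =
             \<lfloor>((real s + 1) * real t - (3 * real s + 4)) / (real t - 3) * real d\<rfloor> + 1" using gen[OF cs] by simp
  qed
qed

end
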